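(* Assume the setting of the context and let $N\in\mathbb{N}$ and $\Delta t=T/M>0$. Then the ABEP scheme satisfies, for every $p\ge2$, \[ \mathbb{E}\Big[\sup_{t\in[0,T]}|\hat{\xi}^{\mathrm{ABEP}}_{N,\Delta t}(t)|^p\Big]\le\begin{cases}C(p,T,L_f,L_g,a,x_0),&\text{if } b=\infty,\\ \max(|a|^p,|b|^p),&\text{if } b<\infty,\end{cases} \] with a constant independent of $N$ and $\Delta t$, and it only takes values in $\operatorname{cl}D_N$: $\mathbb{P}(\hat{\xi}^{\mathrm{ABEP}}_{N,\Delta t}(t)\in\operatorname{cl}D_N\ \forall t\in[0,T])=1$.
   Context: Let $T\in(0,\infty)$, let $(\Omega,\mathcal{F},\mathbb{P},(\mathcal{F}_t)_{t\ge0})$ be a filtered probability space satisfying the usual conditions, and let $B$ be a standard Brownian motion on it. Let $a\in\mathbb{R}$, $b\in\mathbb{R}\cup\{\infty\}$ with $a<b$, and $D=(a,b)$; if $b<\infty$ assume $b-a>2$. For $N\in\mathbb{N}$ let $D_N=(a+1/N,\infty)$ if $b=\infty$ and $D_N=(a+1/N,b-1/N)$ if $b<\infty$. Let $f,g:\mathbb{R}\to\mathbb{R}$ be such that their restrictions to $D$ are Lipschitz continuous with Lipschitz constants $L_f,L_g$. Let $x_0\in D_1$. Let $X$ be the (unique strong) solution of $X(t)=x_0+\int_0^t f(X(s))\,ds+\int_0^t g(X(s))\,dB(s)$, $t\in[0,T]$, and assume the boundary points are unattainable: $\mathbb{P}(X(t)\in D\ \forall t\in[0,T])=1$. Artificial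 Barriers Euler–Peano (ABEP) scheme: for $M\in\mathbb{N}$ let $\Delta t=T/M$, $t_k=k\Delta t$, and $\ell_{\Delta t}(s)=t_k$ for $s\in[t_k,t_{k+1})$. $\hat{\xi}^{\mathrm{ABEP}}_{N,\Delta t}$ is the continuous adapted process which, together with continuous adapted non-decreasing processes $\hat U,\hat L$ with $\hat U(0)=\hat L(0)=0$, satisfies: $\hat{\xi}^{\mathrm{ABEP}}_{N,\Delta t}(t)\in\operatorname{cl}D_N$ for all $t$; $\hat U$ increases only when $\hat{\xi}^{\mathrm{ABEP}}_{N,\Delta t}=b-1/N$ ($\hat U\equiv0$ if $b=\infty$) and $\hat L$ only when $\hat{\xi}^{\mathrm{ABEP}}_{N,\Delta t}=a+1/N$; and for all $t\in[0,T]$, $\hat{\xi}^{\mathrm{ABEP}}_{N,\Delta t}(t)=x_0+\int_0^t f(\hat{\xi}^{\mathrm{ABEP}}_{N,\Delta t}(\ell_{\Delta t}(s)))\,ds+\int_0^t g(\hat{\xi}^{\mathrm{ABEP}}_{N,\Delta t}(\ell_{\Delta t}(s)))\,dB(s)-\hat U(t)+\hat L(t)$ (i.e. Euler–Maruyama increments on each step, reflected at the boundary of $\operatorname{cl}D_N$). Constants $C(\cdot)$ depend only on the listed parameters. *)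

theory Defs
  imports "HOL-Probability.Probability"
begin

definition Dom :: "real \<Rightarrow> ereal \<Rightarrow> real set" where
  "Dom a b = {x. a < x \<and> ereal x < b}"

definition DN :: "nat \<Rightarrow> real \<Rightarrow> ereal \<Rightarrow> real set" where
  "DN N a b = {x. a + 1 / real N < x \<and> ereal x < b - ereal (1 / real N)}"

definition usual_filtration :: "'w measure \<Rightarrow> (real \<Rightarrow> 'w measure) \<Rightarrow> bool" where
  "usual_filtration P F \<longleftrightarrow>
     prob_space P \<and>
     (\<forall>t\<ge>0. subalgebra P (F t)) \<and>
     (\<forall>s t. 0 \<le> s \<and> s \<le> t \<longrightarrow> sets (F s) \<subseteq> sets (F t)) \<and>
     (\<forall>t\<ge>0. sets (F t) = (\<Inter>s\<in>{t<..}. sets (F s))) \<and>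
     (\<forall>A\<in>null_sets P. \<forall>B. B \<subseteq> A \<longrightarrow> B \<in> sets (F 0))"

definition brownian_motion :: "'w measure \<Rightarrow> (real \<Rightarrow> 'w measure) \<Rightarrow> (real \<Rightarrow> 'w \<Rightarrow> real) \<Rightarrow> bool" where
  "brownian_motion P F B \<longleftrightarrow>
     usual_filtration P F \<and>
     (\<forall>t\<ge>0. B t \<in> borel_measurable (F t)) \<and>
     (\<forall>\<omega>\<in>space P. B 0 \<omega> = 0 \<and> continuous_on {0..} (\<lambda>t. B t \<omega>)) \<and>
     (\<forall>s t. 0 \<le> s \<and> s < t \<longrightarrow>
        distributed P lborel (\<lambda>\<omega>. B t \<omega> - B s \<omega>) (normal_density 0 (sqrt (t - s))) \<and>
        prob_space.indep_set P (sets (F s))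
          (sets (vimage_algebra (space P) (\<lambda>\<omega>. B t \<omega> - B s \<omega>) borel)))"

definition ell :: "real \<Rightarrow> nat \<Rightarrow> real \<Rightarrow> real" where
  "ell T M s = (T / real M) * of_int \<lfloor>s / (T / real M)\<rfloor>"

text \<open>Ito integral over [0,t] of the elementary (piecewise constant on the grid)
  integrand h(t_k) on [t_k, t_{k+1}) against B.\<close>

definition elem_ito :: "real \<Rightarrow> nat \<Rightarrow> (real \<Rightarrow> real) \<Rightarrow> (real \<Rightarrow> real) \<Rightarrow> real \<Rightarrow> real" where
  "elem_ito T M h Bpath t =
     (\<Sum>k<M. h (real k * (T / real M)) *
        (Bpath (min t (real (Suc k) * (T / real M))) - Bpath (min t (real k * (T / real M)))))"

text \<open>The ABEP scheme: xi with reflection processes U (upper barrier b-1/N)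
  and L (lower barrier a+1/N).\<close>

definition ABEP :: "'w measure \<Rightarrow> (real \<Rightarrow> 'w measure) \<Rightarrow> (real \<Rightarrow> 'w \<Rightarrow> real)
    \<Rightarrow> (real \<Rightarrow> real) \<Rightarrow> (real \<Rightarrow> real) \<Rightarrow> real \<Rightarrow> nat \<Rightarrow> nat \<Rightarrow> real \<Rightarrow> ereal \<Rightarrow> real
    \<Rightarrow> (real \<Rightarrow> 'w \<Rightarrow> real) \<Rightarrow> (real \<Rightarrow> 'w \<Rightarrow> real) \<Rightarrow> (real \<Rightarrow> 'w \<Rightarrow> real) \<Rightarrow> bool" where
  "ABEP P F B f g T M N a b x0 \<xi> U L \<longleftrightarrow>
     (\<forall>t\<in>{0..T}. \<xi> t \<in> borel_measurable (F t) \<and> U t \<in> borel_measurable (F t)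
                   \<and> L t \<in> borel_measurable (F t)) \<and>
     (\<forall>\<omega>\<in>space P.
        continuous_on {0..T} (\<lambda>t. \<xi> t \<omega>) \<and>
        continuous_on {0..T} (\<lambda>t. U t \<omega>) \<and> continuous_on {0..T} (\<lambda>t. L t \<omega>) \<and>
        mono_on {0..T} (\<lambda>t. U t \<omega>) \<and> mono_on {0..T} (\<lambda>t. L t \<omega>) \<and>
        U 0 \<omega> = 0 \<and> L 0 \<omega> = 0 \<and>
        (\<forall>t\<in>{0..T}. \<xi> t \<omega> \<in> closure (DN N a b)) \<and>
        (b = \<infinity> \<longrightarrow> (\<forall>t\<in>{0..T}. U t \<omega> = 0)) \<and>
        (b \<noteq> \<infinity> \<longrightarrow> (\<forall>s t. 0 \<le> s \<and> s \<le> t \<and> t \<le> T \<and> U s \<omega> < U t \<omega> \<longrightarrow>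
             (\<exists>r\<in>{s..t}. \<xi> r \<omega> = real_of_ereal b - 1 / real N))) \<and>
        (\<forall>s t. 0 \<le> s \<and> s \<le> t \<and> t \<le> T \<and> L s \<omega> < L t \<omega> \<longrightarrow>
             (\<exists>r\<in>{s..t}. \<xi> r \<omega> = a + 1 / real N)) \<and>
        (\<forall>t\<in>{0..T}. \<xi> t \<omega> =
            x0 + integral {0..t} (\<lambda>s. f (\<xi> (ell T M s) \<omega>))
               + elem_ito T M (\<lambda>s. g (\<xi> s \<omega>)) (\<lambda>s. B s \<omega>) t
               - U t \<omega> + L t \<omega>))"

end

theory Submission
  imports Defs
begin

lemma closure_DN_fin:
  assumes "b \<noteq> \<infinity>" "ereal a < b"
  shows "closure (DN N a b) \<subseteq> {a + 1/real N .. real_of_ereal b - 1/real N}"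
proof -
  have "DN N a b \<subseteq> {a + 1/real N .. real_of_ereal b - 1/real N}"
    using assms unfolding DN_def
    by (cases b) auto
  then show ?thesis by (intro closure_minimal) auto
qed

lemma closure_DN_inf:
  shows "closure (DN N a \<infinity>) \<subseteq> {a + 1/real N ..}"
proof -
  have "DN N a \<infinity> \<subseteq> {a + 1/real N ..}"
    unfolding DN_def by auto
  then show ?thesis by (intro closure_minimal) auto
qed

lemma max_powr:
  fixes x y p :: real
  assumes "0 \<le> x" "0 \<le> y" "0 \<le> p"
  shows "max x y powr p = max (x powr p) (y powr p)"
proof (cases "x \<le> y")
  case True
  then have "x powr p \<le> y powr p" using assms by (intro powr_mono2) auto
  then show ?thesis using True by (simp add: max_def)
next
  case False
  then have "y powr p \<le> x powr p" using assms by (intro powr_mono2) auto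
  then show ?thesis using False by (simp add: max_def)
qed

lemma part3:
  assumes "brownian_motion P F B" "ABEP P F B f g T M N a b x0 \<xi> U L"
  shows "prob_space.prob P {\<omega>\<in>space P. \<forall>t\<in>{0..T}. \<xi> t \<omega> \<in> closure (DN N a b)} = 1"
proof -
  have ps: "prob_space P" using assms(1) unfolding brownian_motion_def usual_filtration_def by auto
  have "{\<omega>\<in>space P. \<forall>t\<in>{0..T}. \<xi> t \<omega> \<in> closure (DN N a b)} = space P"
    using assms(2) unfolding ABEP_def by auto
  then show ?thesis using prob_space.prob_space[OF ps] by simp
qed

lemma part2:
  assumes "brownian_motion P F B" "ABEP P F B f g T M N a b x0 \<xi> U L"
    "b \<noteq> \<infinity>" "ereal a < b" "N \<ge> 1" "p \<ge> 0"
  shows "(\<integral>\<^sup>+\<omega>. (SUP t\<in>{0..T}. ennreal (\<bar>\<xi> t \<omega>\<bar> powr p)) \<partial>P)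
             \<le> ennreal (max (\<bar>a\<bar> powr p) (\<bar>real_of_ereal b\<bar> powr p))"
proof -
  have ps: "prob_space P" using assms(1) unfolding brownian_motion_def usual_filtration_def by auto
  let ?c = "max (\<bar>a\<bar> powr p) (\<bar>real_of_ereal b\<bar> powr p)"
  have pt: "\<bar>\<xi> t \<omega>\<bar> powr p \<le> ?c" if "\<omega> \<in> space P" "t \<in> {0..T}" for t \<omega>
  proof -
    have "\<xi> t \<omega> \<in> {a + 1/real N .. real_of_ereal b - 1/real N}"
      using assms(2) that closure_DN_fin[OF assms(3,4), of N] unfolding ABEP_def by blast
    moreover have "1/real N \<ge> 0" by simp
    ultimately have "a \<le> \<xi> t \<omega>" "\<xi> t \<omega> \<le> real_of_ereal b"
      by (simp_all, linarith+)
    then have "\<bar>\<xi> t \<omega>\<bar> \<le> max \<bar>a\<bar> \<bar>real_of_ereal b\<bar>" by (smt (verit))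
    then have "\<bar>\<xi> t \<omega>\<bar> powr p \<le> (max \<bar>a\<bar> \<bar>real_of_ereal b\<bar>) powr p"
      using assms(6) by (intro powr_mono2) auto
    also have "\<dots> = ?c" by (rule max_powr) (use assms(6) in \<open>simp_all only: abs_ge_zero\<close>)
    finally show ?thesis .
  qed
  have "(\<integral>\<^sup>+\<omega>. (SUP t\<in>{0..T}. ennreal (\<bar>\<xi> t \<omega>\<bar> powr p)) \<partial>P) \<le> (\<integral>\<^sup>+\<omega>. ennreal ?c \<partial>P)"
    by (intro nn_integral_mono SUP_least ennreal_leI pt) auto
  also have "\<dots> = ennreal ?c" using prob_space.emeasure_space_1[OF ps] by simp
  finally show ?thesis .
qed

lemma pow_mix:
  fixes x y :: real
  assumes "0 \<le> x" "0 \<le> y" "j \<le> n"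
  shows "x^(n-j) * y^j \<le> x^n + y^n"
proof (cases "x \<le> y")
  case True
  have "x^(n-j) * y^j \<le> y^(n-j) * y^j"
    using assms True by (intro mult_right_mono power_mono) auto
  also have "\<dots> = y^n" using assms(3) by (simp add: power_add[symmetric])
  finally show ?thesis using zero_le_power[OF assms(1), of n] by linarith
next
  case False
  have "x^(n-j) * y^j \<le> x^(n-j) * x^j"
    using assms False by (intro mult_left_mono power_mono) auto
  also have "\<dots> = x^n" using assms(3) by (simp add: power_add[symmetric])
  finally show ?thesis using zero_le_power[OF assms(2), of n] by linarith
qed

lemma sum3_pow:
  fixes u v w :: real
  assumes "0 \<le> u" "0 \<le> v" "0 \<le> w"
  shows "(u+v+w)^n \<le> 3^n * (u^n+v^n+w^n)"
proof -
  let ?m = "max u (max v w)"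
  have "(u+v+w)^n \<le> (3 * ?m)^n" using assms by (intro power_mono) auto
  also have "\<dots> = 3^n * ?m^n" by (simp add: power_mult_distrib)
  also have "?m^n \<le> u^n+v^n+w^n"
    using assms by (auto simp: max_def zero_le_power)
  then have "3^n * ?m^n \<le> 3^n * (u^n+v^n+w^n)" by simp
  finally show ?thesis .
qed

lemma sum2_pow:
  fixes u v :: real
  assumes "0 \<le> u" "0 \<le> v"
  shows "(u+v)^n \<le> 2^n * (u^n+v^n)"
proof -
  let ?m = "max u v"
  have "(u+v)^n \<le> (2 * ?m)^n" using assms by (intro power_mono) auto
  also have "\<dots> = 2^n * ?m^n" by (simp add: power_mult_distrib)
  also have "?m^n \<le> u^n+v^n"
    using assms by (auto simp: max_def zero_le_power)
  then have "2^n * ?m^n \<le> 2^n * (u^n+v^n)" by simp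
  finally show ?thesis .
qed

lemma power_mean_sum:
  fixes a :: "nat \<Rightarrow> real"
  assumes "even q" "q \<ge> 1"
  shows "(\<Sum>k<n. a k)^q \<le> real n^(q-1) * (\<Sum>k<n. (a k)^q)"
proof (cases "n = 0")
  case True then show ?thesis using assms by (simp add: zero_power)
next
  case False
  have "((\<Sum>k<n. (1/real n) *\<^sub>R (a k)))^q \<le> (\<Sum>k<n. (1/real n) * (a k)^q)"
    using False by (intro convex_on_sum[OF _ _ convex_power_even[OF assms(1)]]) auto
  then have h: "((\<Sum>k<n. a k) / real n)^q \<le> (\<Sum>k<n. (a k)^q) / real n"
    by (simp add: sum_divide_distrib)
  have np: "real n > 0" using False by simp
  have "(\<Sum>k<n. a k)^q = real n^q * ((\<Sum>k<n. a k) / real n)^q"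
    using np by (simp add: power_divide)
  also have "\<dots> \<le> real n^q * ((\<Sum>k<n. (a k)^q) / real n)"
    using h np by (intro mult_left_mono) auto
  also have "\<dots> = real n^(q-1) * (\<Sum>k<n. (a k)^q)"
    using np assms(2) by (cases q) auto
  finally show ?thesis .
qed

lemma tangent_pow:
  fixes u w :: real
  assumes "0 \<le> u" "0 \<le> w" "r \<ge> 1"
  shows "u^r + real r * u^(r-1) * (w-u) \<le> w^r"
proof -
  have eq: "w^r - u^r = (w - u) * (\<Sum>i<r. u^(r - Suc i) * w^i)"
    by (rule power_diff_sumr2)
  show ?thesis
  proof (cases "u \<le> w")
    case True
    have "(\<Sum>i<r. u^(r-1)) \<le> (\<Sum>i<r. u^(r - Suc i) * w^i)"
    proof (intro sum_mono)
      fix i assume "i \<in> {..<r}"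
      then have "u^(r-1) = u^(r - Suc i) * u^i" by (simp add: power_add[symmetric])
      also have "\<dots> \<le> u^(r - Suc i) * w^i" using True assms by (intro mult_left_mono power_mono) auto
      finally show "u^(r-1) \<le> u^(r - Suc i) * w^i" .
    qed
    then have "(w-u) * (real r * u^(r-1)) \<le> (w-u) * (\<Sum>i<r. u^(r - Suc i) * w^i)"
      using True by (intro mult_left_mono) auto
    then show ?thesis using eq by (simp add: algebra_simps)
  next
    case False
    have "(\<Sum>i<r. u^(r - Suc i) * w^i) \<le> (\<Sum>i<r. u^(r-1))"
    proof (intro sum_mono)
      fix i assume "i \<in> {..<r}"
      have "u^(r - Suc i) * w^i \<le> u^(r - Suc i) * u^i" using False assms by (intro mult_left_mono power_mono) auto
      also have "\<dots> = u^(r-1)" using \<open>i \<in> {..<r}\<close> by (simp add: power_add[symmetric])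
      finally show "u^(r - Suc i) * w^i \<le> u^(r-1)" .
    qed
    then have "(w-u) * (real r * u^(r-1)) \<le> (w-u) * (\<Sum>i<r. u^(r - Suc i) * w^i)"
      using False by (intro mult_left_mono_neg) auto
    then show ?thesis using eq by (simp add: algebra_simps)
  qed
qed

lemma tangent_abs_pow:
  fixes x y :: real
  assumes "r \<ge> 1"
  shows "\<bar>y\<bar>^r - \<bar>x\<bar>^r \<ge> real r * \<bar>x\<bar>^(r-1) * sgn x * (y - x)"
proof -
  have "sgn x * y \<le> \<bar>y\<bar>" by (auto simp: sgn_if)
  have "sgn x * x = \<bar>x\<bar>" by (auto simp: sgn_if)
  have "real r * \<bar>x\<bar>^(r-1) * sgn x * (y - x) = real r * \<bar>x\<bar>^(r-1) * (sgn x * y - \<bar>x\<bar>)"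
    using \<open>sgn x * x = \<bar>x\<bar>\<close> by (simp add: algebra_simps)
  also have "\<dots> \<le> real r * \<bar>x\<bar>^(r-1) * (\<bar>y\<bar> - \<bar>x\<bar>)"
    using \<open>sgn x * y \<le> \<bar>y\<bar>\<close> by (intro mult_left_mono) auto
  also have "\<dots> \<le> \<bar>y\<bar>^r - \<bar>x\<bar>^r" using tangent_pow[of "\<bar>x\<bar>" "\<bar>y\<bar>" r] assms by simp
  finally show ?thesis .
qed

lemma Max_atMost_Suc:
  fixes x :: "nat \<Rightarrow> real"
  shows "Max (x ` {..Suc n}) = max (x (Suc n)) (Max (x ` {..n}))"
  by (simp add: atMost_Suc Max_insert)

lemma doob_pathwise_aux:
  fixes x :: "nat \<Rightarrow> real"
  defines "m \<equiv> \<lambda>i. Max (x ` {..i})"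
  shows "4 * (x n)^2 - 4 * (\<Sum>i<n. m i * (x (Suc i) - x i)) - (m n)^2 \<ge> (2 * x n - m n)^2"
proof (induction n)
  case 0
  have "m 0 = x 0" unfolding m_def by simp
  then show ?case by (simp add: power2_eq_square)
next
  case (Suc n)
  have ms: "m (Suc n) = max (x (Suc n)) (m n)" unfolding m_def by (rule Max_atMost_Suc)
  show ?case
  proof (cases "x (Suc n) \<le> m n")
    case True
    then have "m (Suc n) = m n" using ms by simp
    then show ?thesis using Suc.IH by (simp add: power2_eq_square algebra_simps)
  next
    case False
    then have mm: "m (Suc n) = x (Suc n)" using ms by simp
    have "4 * (x (Suc n))^2 - 4 * (\<Sum>i<Suc n. m i * (x (Suc i) - x i)) - (m (Suc n))^2
          - (2 * x (Suc n) - m (Suc n))^2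
       = (4 * (x n)^2 - 4 * (\<Sum>i<n. m i * (x (Suc i) - x i)) - (m n)^2 - (2 * x n - m n)^2)
          + 2 * (x (Suc n) - m n)^2"
      unfolding mm by (simp add: power2_eq_square algebra_simps)
    moreover have "(x (Suc n) - m n)^2 \<ge> 0" by simp
    ultimately show ?thesis using Suc.IH by linarith
  qed
qed

lemma doob_pathwise:
  fixes x :: "nat \<Rightarrow> real"
  shows "(Max (x ` {..n}))^2 \<le> 4 * (x n)^2 - 4 * (\<Sum>i<n. Max (x ` {..i}) * (x (Suc i) - x i))"
  using doob_pathwise_aux[of x n] by (smt (verit) zero_le_power2)

lemma abs_pow_split:
  fixes d :: real
  assumes "2 \<le> j" "j \<le> q"
  shows "\<bar>d\<bar>^j \<le> d^2 + \<bar>d\<bar>^q"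
proof (cases "\<bar>d\<bar> \<le> 1")
  case True
  have "\<bar>d\<bar>^j \<le> \<bar>d\<bar>^2" using True assms by (intro power_decreasing) auto
  moreover have "0 \<le> \<bar>d\<bar>^q" by simp
  moreover have "\<bar>d\<bar>^2 = d^2" by simp
  ultimately show ?thesis by linarith
next
  case False
  have "\<bar>d\<bar>^j \<le> \<bar>d\<bar>^q" using False assms by (intro power_increasing) auto
  moreover have "0 \<le> d^2" by simp
  ultimately show ?thesis by linarith
qed

lemma gronwall_discrete:
  fixes u :: "nat \<Rightarrow> real"
  assumes "A \<ge> 0" "c \<ge> 0"
    and "\<And>n. n \<le> M \<Longrightarrow> u n \<le> A + c * (\<Sum>k<n. u k)"
  shows "n \<le> M \<Longrightarrow> u n \<le> A * (1 + c)^n"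
proof (induction n rule: less_induct)
  case (less n)
  have "u n \<le> A + c * (\<Sum>k<n. u k)" using assms(3) less.prems by simp
  also have "\<dots> \<le> A + c * (\<Sum>k<n. A * (1+c)^k)"
    using less assms by (intro add_left_mono mult_left_mono sum_mono) auto
  also have "c * (\<Sum>k<n. A * (1+c)^k) = A * ((1+c)^n - 1)"
  proof -
    have h: "c * (\<Sum>k<n. (1+c)^k) = (1+c)^n - 1"
      by (induction n) (auto simp: algebra_simps)
    have "c * (\<Sum>k<n. A*(1+c)^k) = A * (c * (\<Sum>k<n. (1+c)^k))"
      by (simp add: sum_distrib_left mult_ac)
    then show ?thesis by (simp only: h)
  qed
  finally show ?case by (simp add: algebra_simps)
qed

lemma skorokhod_bound:
  fixes xi L :: "real \<Rightarrow> real"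
  assumes t: "0 \<le> t" "t \<le> T"
  and cxi: "continuous_on {0..T} xi" and cL: "continuous_on {0..T} L"
  and mL: "mono_on {0..T} L" and L0: "L 0 = 0"
  and ge: "\<forall>s\<in>{0..T}. c \<le> xi s"
  and touch: "\<forall>s t. 0 \<le> s \<and> s \<le> t \<and> t \<le> T \<and> L s < L t \<longrightarrow> (\<exists>r\<in>{s..t}. xi r = c)"
  and R: "\<forall>s\<in>{0..t}. \<bar>xi s - L s - x0\<bar> \<le> R"
  shows "\<bar>xi t\<bar> \<le> \<bar>c\<bar> + \<bar>x0\<bar> + 2*R"
proof -
  define Z where "Z = {s\<in>{0..t}. xi s = c}"
  have R0: "0 \<le> R" using R t by (metis abs_ge_zero atLeastAtMost_iff order_refl order_trans)
  have xt: "c \<le> xi t" using ge t by auto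
  have Rt: "\<bar>xi t - L t - x0\<bar> \<le> R" using R t by auto
  show ?thesis
  proof (cases "Z = {}")
    case True
    have "\<not> L 0 < L t"
    proof
      assume "L 0 < L t"
      then obtain r where "r \<in> {0..t}" "xi r = c" using touch t by blast
      then have "r \<in> Z" unfolding Z_def by auto
      then show False using True by auto
    qed
    moreover have "L 0 \<le> L t" using mL t by (auto intro: mono_onD)
    ultimately have "L t = 0" using L0 by auto
    then show ?thesis using Rt xt R0 by auto
  next
    case False
    have ct: "continuous_on {0..t} xi" using t by (intro continuous_on_subset[OF cxi]) auto
    have cl: "closed Z" unfolding Z_def
      by (rule continuous_closed_preimage_constant[OF ct]) auto
    have bdd: "bdd_above Z" unfolding Z_def by (auto intro: bdd_aboveI[of _ t])
    define s where "s = Sup Z"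
    have sZ: "s \<in> Z" unfolding s_def using closed_contains_Sup[OF False bdd cl] .
    then have s0: "0 \<le> s" "s \<le> t" "xi s = c" unfolding Z_def by auto
    have "\<not> L s < L t"
    proof
      assume lt: "L s < L t"
      then have "s \<noteq> t" by auto
      then have st: "s < t" using s0 by auto
      have "s \<in> {0..T}" using s0 t by auto
      then obtain d where d: "d > 0" "\<forall>x'\<in>{0..T}. dist x' s < d \<longrightarrow> dist (L x') (L s) < L t - L s"
        using cL lt unfolding continuous_on_iff by (metis diff_gt_0_iff_gt)
      define s' where "s' = min t (s + d/2)"
      have s'1: "s < s'" "s' \<le> t" using st d unfolding s'_def by auto
      have "dist s' s < d" using s'1 d unfolding s'_def dist_real_def by auto
      moreover have "s' \<in> {0..T}" using s'1 s0 t by auto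
      ultimately have "dist (L s') (L s) < L t - L s" using d by auto
      then have "L s' < L t" unfolding dist_real_def by auto
      then obtain r where r: "r \<in> {s'..t}" "xi r = c" using touch s'1 s0 t by (meson order_trans less_imp_le)
      then have "r \<in> Z" unfolding Z_def using s'1 s0 by auto
      then have "r \<le> s" unfolding s_def using bdd by (rule cSup_upper)
      then show False using r s'1 by auto
    qed
    moreover have "L s \<le> L t" using mL s0 t by (auto intro: mono_onD)
    ultimately have "L s = L t" by auto
    moreover have "\<bar>xi s - L s - x0\<bar> \<le> R" using R s0 by auto
    ultimately have "xi t \<le> c + 2 * R" using Rt s0 by auto
    then show ?thesis using xt by auto
  qed
qed

locale abep_inf =
  fixes P :: "'w measure" and F :: "real \<Rightarrow> 'w measure" and B :: "real \<Rightarrow> 'w \<Rightarrow> real"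
    and f g :: "real \<Rightarrow> real" and T :: real and M N :: nat and a x0 :: real
    and \<xi> U L :: "real \<Rightarrow> 'w \<Rightarrow> real" and Af Lf Ag Lg :: real
  assumes bm: "brownian_motion P F B"
    and ab: "ABEP P F B f g T M N a \<infinity> x0 \<xi> U L"
    and Tpos: "T > 0" and M1: "M \<ge> 1" and N1: "N \<ge> 1"
    and fcont: "continuous_on {a + 1 / real N..} f" and gcont: "continuous_on {a + 1 / real N..} g"
    and Af: "Af \<ge> 0" and Lf: "Lf \<ge> 0" and Ag: "Ag \<ge> 0" and Lg: "Lg \<ge> 0"
    and fgrow: "\<And>x. x \<ge> a + 1 / real N \<Longrightarrow> \<bar>f x\<bar> \<le> Af + Lf * \<bar>x\<bar>"
    and ggrow: "\<And>x. x \<ge> a + 1 / real N \<Longrightarrow> \<bar>g x\<bar> \<le> Ag + Lg * \<bar>x\<bar>"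
begin

definition "dt = T / real M"
definition "tk k = real k * dt"
definition "X k \<omega> = \<xi> (tk k) \<omega>"
definition "I s \<omega> = elem_ito T M (\<lambda>s. g (\<xi> s \<omega>)) (\<lambda>s. B s \<omega>) s"
definition "Dr s \<omega> = integral {0..s} (\<lambda>r. f (\<xi> (ell T M r) \<omega>))"
definition "cc = a + 1 / real N"

lemma dt_pos: "dt > 0" using Tpos M1 unfolding dt_def by auto

lemma tk_mono: "i \<le> j \<Longrightarrow> tk i \<le> tk j"
  unfolding tk_def using dt_pos by (intro mult_right_mono) auto

lemma tk_strict: "i < j \<Longrightarrow> tk i < tk j"
  unfolding tk_def using dt_pos by (intro mult_strict_right_mono) auto

lemma tk_0[simp]: "tk 0 = 0" unfolding tk_def by simp
lemma tk_nonneg: "0 \<le> tk k" unfolding tk_def using dt_pos by simp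
lemma tk_Suc: "tk (Suc k) = tk k + dt" unfolding tk_def by (simp add: algebra_simps)
lemma tk_M: "tk M = T" unfolding tk_def dt_def using M1 by simp
lemma tk_le_T: "k \<le> M \<Longrightarrow> tk k \<le> T" using tk_mono[of k M] tk_M by simp
lemma dt_le_T: "dt \<le> T" unfolding dt_def using M1 Tpos by (simp add: divide_le_eq)
lemma n_dt_le_T: "n \<le> M \<Longrightarrow> real n * dt \<le> T" using tk_le_T unfolding tk_def by simp

lemma cc_bound: "\<bar>cc\<bar> \<le> \<bar>a\<bar> + 1"
proof -
  have "0 < 1 / real N" "1 / real N \<le> 1" using N1 by auto
  then show ?thesis unfolding cc_def by linarith
qed

lemma I_sum: "I s \<omega> = (\<Sum>j<M. g (X j \<omega>) * (B (min s (tk (Suc j))) \<omega> - B (min s (tk j)) \<omega>))"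
  unfolding I_def elem_ito_def X_def tk_def dt_def by simp

lemma I_formula:
  assumes "k < M" "tk k \<le> s" "s \<le> tk (Suc k)"
  shows "I s \<omega> = (\<Sum>j<k. g (X j \<omega>) * (B (tk (Suc j)) \<omega> - B (tk j) \<omega>)) + g (X k \<omega>) * (B s \<omega> - B (tk k) \<omega>)"
proof -
  let ?t = "\<lambda>j. g (X j \<omega>) * (B (min s (tk (Suc j))) \<omega> - B (min s (tk j)) \<omega>)"
  have split: "{..<M} = {..<Suc k} \<union> {Suc k..<M}" using assms(1) by auto
  have "I s \<omega> = sum ?t {..<Suc k} + sum ?t {Suc k..<M}"
    unfolding I_sum split by (rule sum.union_disjoint) auto
  moreover have "sum ?t {Suc k..<M} = 0"
  proof (intro sum.neutral ballI)
    fix j assume "j \<in> {Suc k..<M}"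
    then have "tk (Suc k) \<le> tk j" "tk j \<le> tk (Suc j)" by (auto intro: tk_mono)
    then show "?t j = 0" using assms by (simp add: min_def)
  qed
  moreover have "sum ?t {..<Suc k} = (\<Sum>j<k. g (X j \<omega>) * (B (tk (Suc j)) \<omega> - B (tk j) \<omega>)) + ?t k"
  proof -
    have "sum ?t {..<k} = (\<Sum>j<k. g (X j \<omega>) * (B (tk (Suc j)) \<omega> - B (tk j) \<omega>))"
    proof (intro sum.cong refl)
      fix j assume "j \<in> {..<k}"
      then have "tk (Suc j) \<le> tk k" "tk j \<le> tk (Suc j)" by (auto intro: tk_mono)
      then have "min s (tk (Suc j)) = tk (Suc j)" "min s (tk j) = tk j" using assms by auto
      then show "?t j = g (X j \<omega>) * (B (tk (Suc j)) \<omega> - B (tk j) \<omega>)" by simp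
    qed
    then show ?thesis by simp
  qed
  moreover have "?t k = g (X k \<omega>) * (B s \<omega> - B (tk k) \<omega>)" using assms by (simp add: min_def)
  ultimately show ?thesis by simp
qed

lemma I_incr:
  assumes "k < M" "tk k \<le> s" "s \<le> s'" "s' \<le> tk (Suc k)"
  shows "I s' \<omega> - I s \<omega> = g (X k \<omega>) * (B s' \<omega> - B s \<omega>)"
  using I_formula[of k s \<omega>] I_formula[of k s' \<omega>] assms by (simp add: algebra_simps)

lemma I_0: "I 0 \<omega> = 0"
  using I_formula[of 0 0 \<omega>] M1 tk_nonneg[of 1] by simp

lemma ell_eq:
  assumes "tk k \<le> r" "r < tk (Suc k)"
  shows "ell T M r = tk k"
proof -
  have "real k \<le> r / dt" "r / dt < real k + 1"
    using assms dt_pos unfolding tk_def by (auto simp: field_simps)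
  then have "\<lfloor>r / dt\<rfloor> = int k" by (simp add: floor_eq_iff)
  then show ?thesis unfolding ell_def tk_def dt_def by simp
qed

lemma drift_piece:
  assumes "tk k \<le> s" "s \<le> tk (Suc k)"
  shows "((\<lambda>r. f (\<xi> (ell T M r) \<omega>)) has_integral ((s - tk k) * f (X k \<omega>))) {tk k..s}"
proof -
  note has_integral_const_real[of "f (X k \<omega>)" "tk k" s]
  then have h: "((\<lambda>r. f (X k \<omega>)) has_integral ((s - tk k) * f (X k \<omega>))) {tk k..s}"
    using assms by simp
  show ?thesis
  proof (rule has_integral_spike_finite[OF _ _ h])
    show "finite {tk (Suc k)}" by simp
    fix r assume "r \<in> {tk k..s} - {tk (Suc k)}"
    then have "tk k \<le> r" "r < tk (Suc k)" using assms by auto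
    then show "f (\<xi> (ell T M r) \<omega>) = f (X k \<omega>)" unfolding X_def by (simp add: ell_eq)
  qed
qed

lemma drift_formula:
  assumes "tk k \<le> s" "s \<le> tk (Suc k)"
  shows "((\<lambda>r. f (\<xi> (ell T M r) \<omega>)) has_integral (dt * (\<Sum>j<k. f (X j \<omega>)) + (s - tk k) * f (X k \<omega>))) {0..s}"
  using assms
proof (induction k arbitrary: s)
  case 0
  then show ?case using drift_piece[of 0 s \<omega>] by simp
next
  case (Suc k)
  have A: "((\<lambda>r. f (\<xi> (ell T M r) \<omega>)) has_integral (dt * (\<Sum>j<k. f (X j \<omega>)) + (tk (Suc k) - tk k) * f (X k \<omega>))) {0..tk (Suc k)}"
    using Suc.IH[of "tk (Suc k)"] tk_mono[of k "Suc k"] by simp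
  have Bp: "((\<lambda>r. f (\<xi> (ell T M r) \<omega>)) has_integral ((s - tk (Suc k)) * f (X (Suc k) \<omega>))) {tk (Suc k)..s}"
    using drift_piece Suc.prems by blast
  have "((\<lambda>r. f (\<xi> (ell T M r) \<omega>)) has_integral ((dt * (\<Sum>j<k. f (X j \<omega>)) + (tk (Suc k) - tk k) * f (X k \<omega>)) + (s - tk (Suc k)) * f (X (Suc k) \<omega>))) {0..s}"
    by (rule has_integral_combine[OF _ _ A Bp]) (use Suc.prems tk_nonneg in auto)
  moreover have "dt * (\<Sum>j<k. f (X j \<omega>)) + (tk (Suc k) - tk k) * f (X k \<omega>) = dt * (\<Sum>j<Suc k. f (X j \<omega>))"
    by (simp add: tk_Suc algebra_simps)
  ultimately show ?case by simp
qed

lemma grid_locate: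
  assumes "0 \<le> s" "s \<le> tk n" "n \<le> M"
  shows "\<exists>k<M. tk k \<le> s \<and> s \<le> tk (Suc k) \<and> (k < n \<or> s = 0)"
proof (cases "s < tk n")
  case True
  define k where "k = nat \<lfloor>s / dt\<rfloor>"
  have "0 \<le> s / dt" using assms dt_pos by simp
  then have k1: "real k \<le> s / dt" "s / dt < real k + 1" unfolding k_def by linarith+
  have "s / dt < real n" using True dt_pos unfolding tk_def by (simp add: field_simps)
  then have "k < n" using k1 by linarith
  moreover have "tk k \<le> s" "s \<le> tk (Suc k)" using k1 dt_pos unfolding tk_def by (auto simp: field_simps)
  ultimately show ?thesis using assms by (intro exI[of _ k]) auto
next
  case False
  then have s: "s = tk n" using assms by auto
  show ?thesis
  proof (cases n)
    case 0 then show ?thesis using s M1 by (intro exI[of _ 0]) (auto simp: tk_nonneg)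
  next
    case (Suc m) then show ?thesis using s assms tk_mono[of m "Suc m"] by (intro exI[of _ m]) auto
  qed
qed

lemma Dr_bound:
  assumes "0 \<le> s" "s \<le> tk n" "n \<le> M"
  shows "\<bar>Dr s \<omega>\<bar> \<le> dt * (\<Sum>j<n. \<bar>f (X j \<omega>)\<bar>)"
proof -
  obtain k where k: "k < M" "tk k \<le> s" "s \<le> tk (Suc k)" "k < n \<or> s = 0"
    using grid_locate[OF assms] by blast
  have nn: "0 \<le> dt * (\<Sum>j<n. \<bar>f (X j \<omega>)\<bar>)" using dt_pos by (simp add: sum_nonneg)
  show ?thesis
  proof (cases "s = 0")
    case True
    then show ?thesis unfolding Dr_def using nn by simp
  next
    case False
    then have kn: "k < n" using k by auto
    have "Dr s \<omega> = dt * (\<Sum>j<k. f (X j \<omega>)) + (s - tk k) * f (X k \<omega>)"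
      unfolding Dr_def using drift_formula[OF k(2,3)] by blast
    also have "\<bar>\<dots>\<bar> \<le> dt * (\<Sum>j<k. \<bar>f (X j \<omega>)\<bar>) + dt * \<bar>f (X k \<omega>)\<bar>"
    proof -
      have "\<bar>dt * (\<Sum>j<k. f (X j \<omega>))\<bar> \<le> dt * (\<Sum>j<k. \<bar>f (X j \<omega>)\<bar>)"
        using dt_pos by (simp add: abs_mult sum_abs)
      moreover have "\<bar>(s - tk k) * f (X k \<omega>)\<bar> \<le> dt * \<bar>f (X k \<omega>)\<bar>"
        using k tk_Suc[of k] by (simp add: abs_mult mult_right_mono)
      ultimately show ?thesis by (smt (verit))
    qed
    also have "\<dots> = dt * (\<Sum>j<Suc k. \<bar>f (X j \<omega>)\<bar>)" by (simp add: algebra_simps)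
    also have "\<dots> \<le> dt * (\<Sum>j<n. \<bar>f (X j \<omega>)\<bar>)"
      using kn dt_pos by (intro mult_left_mono sum_mono2) auto
    finally show ?thesis .
  qed
qed

end

context abep_inf begin

lemma ps: "prob_space P" using bm unfolding brownian_motion_def usual_filtration_def by auto

lemma sub: "0 \<le> t \<Longrightarrow> subalgebra P (F t)"
  using bm unfolding brownian_motion_def usual_filtration_def by auto

lemma space_F: "0 \<le> t \<Longrightarrow> space (F t) = space P"
  using sub unfolding subalgebra_def by auto

lemma filt_mono: "0 \<le> s \<Longrightarrow> s \<le> t \<Longrightarrow> sets (F s) \<subseteq> sets (F t)"
  using bm unfolding brownian_motion_def usual_filtration_def by blast

lemma sub2: "0 \<le> s \<Longrightarrow> s \<le> t \<Longrightarrow> subalgebra (F t) (F s)"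
  unfolding subalgebra_def using space_F[of s] space_F[of t] filt_mono by auto

lemma meas_mono: "0 \<le> s \<Longrightarrow> s \<le> t \<Longrightarrow> h \<in> borel_measurable (F s) \<Longrightarrow> h \<in> borel_measurable (F t)"
  by (rule measurable_from_subalg[OF sub2])

lemma meas_P: "0 \<le> t \<Longrightarrow> h \<in> borel_measurable (F t) \<Longrightarrow> h \<in> borel_measurable P"
  by (rule measurable_from_subalg[OF sub])

lemma B_meas: "0 \<le> s \<Longrightarrow> s \<le> t \<Longrightarrow> B s \<in> borel_measurable (F t)"
  using bm meas_mono unfolding brownian_motion_def by blast

lemma xi_meas0: "0 \<le> s \<Longrightarrow> s \<le> T \<Longrightarrow> \<xi> s \<in> borel_measurable (F s)"
  using ab[unfolded ABEP_def, THEN conjunct1] by auto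

lemma xi_meas: "0 \<le> s \<Longrightarrow> s \<le> t \<Longrightarrow> s \<le> T \<Longrightarrow> \<xi> s \<in> borel_measurable (F t)"
  using xi_meas0 meas_mono by blast

lemma X_meas: "k \<le> M \<Longrightarrow> tk k \<le> t \<Longrightarrow> X k \<in> borel_measurable (F t)"
  unfolding X_def using xi_meas tk_nonneg tk_le_T by auto

lemma path_facts:
  assumes "\<omega> \<in> space P"
  shows "continuous_on {0..T} (\<lambda>t. \<xi> t \<omega>)" "continuous_on {0..T} (\<lambda>t. L t \<omega>)"
    "mono_on {0..T} (\<lambda>t. L t \<omega>)" "L 0 \<omega> = 0"
    "\<forall>s\<in>{0..T}. cc \<le> \<xi> s \<omega>"
    "\<forall>s t. 0 \<le> s \<and> s \<le> t \<and> t \<le> T \<and> L s \<omega> < L t \<omega> \<longrightarrow> (\<exists>r\<in>{s..t}. \<xi> r \<omega> = cc)"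
    "\<forall>t\<in>{0..T}. \<xi> t \<omega> = x0 + Dr t \<omega> + I t \<omega> + L t \<omega>"
proof -
  note A = ab[unfolded ABEP_def, THEN conjunct2, rule_format, OF assms]
  show "continuous_on {0..T} (\<lambda>t. \<xi> t \<omega>)" "continuous_on {0..T} (\<lambda>t. L t \<omega>)"
    "mono_on {0..T} (\<lambda>t. L t \<omega>)" "L 0 \<omega> = 0" using A by auto
  show "\<forall>s\<in>{0..T}. cc \<le> \<xi> s \<omega>"
  proof
    fix s assume "s \<in> {0..T}"
    then have "\<xi> s \<omega> \<in> closure (DN N a \<infinity>)" using A by blast
    then show "cc \<le> \<xi> s \<omega>" using closure_DN_inf[of N a] unfolding cc_def by auto
  qed
  show "\<forall>s t. 0 \<le> s \<and> s \<le> t \<and> t \<le> T \<and> L s \<omega> < L t \<omega> \<longrightarrow> (\<exists>r\<in>{s..t}. \<xi> r \<omega> = cc)"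
    using A unfolding cc_def by blast
  show "\<forall>t\<in>{0..T}. \<xi> t \<omega> = x0 + Dr t \<omega> + I t \<omega> + L t \<omega>"
    using A unfolding Dr_def I_def by auto
qed

lemma X_ge: "\<omega> \<in> space P \<Longrightarrow> k \<le> M \<Longrightarrow> cc \<le> X k \<omega>"
proof -
  assume "\<omega> \<in> space P" "k \<le> M"
  then have "tk k \<in> {0..T}" using tk_nonneg tk_le_T by auto
  then show "cc \<le> X k \<omega>" unfolding X_def using path_facts(5)[OF \<open>\<omega> \<in> space P\<close>] by blast
qed

lemma path_bound:
  assumes "\<omega> \<in> space P" "n \<le> M" "0 \<le> t" "t \<le> tk n" "\<forall>s\<in>{0..tk n}. \<bar>I s \<omega>\<bar> \<le> Rj"
  shows "\<bar>\<xi> t \<omega>\<bar> \<le> \<bar>a\<bar> + 1 + \<bar>x0\<bar> + 2 * (dt * (\<Sum>j<n. \<bar>f (X j \<omega>)\<bar>) + Rj)"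
proof -
  have tT: "t \<le> T" using assms tk_le_T[of n] by auto
  have R: "\<forall>s\<in>{0..t}. \<bar>\<xi> s \<omega> - L s \<omega> - x0\<bar> \<le> dt * (\<Sum>j<n. \<bar>f (X j \<omega>)\<bar>) + Rj"
  proof
    fix s assume s: "s \<in> {0..t}"
    then have "\<xi> s \<omega> - L s \<omega> - x0 = Dr s \<omega> + I s \<omega>" using path_facts(7)[OF assms(1)] tT by auto
    moreover have "\<bar>Dr s \<omega>\<bar> \<le> dt * (\<Sum>j<n. \<bar>f (X j \<omega>)\<bar>)" using Dr_bound[of s n \<omega>] s assms by auto
    moreover have "\<bar>I s \<omega>\<bar> \<le> Rj" using assms s by auto
    ultimately show "\<bar>\<xi> s \<omega> - L s \<omega> - x0\<bar> \<le> dt * (\<Sum>j<n. \<bar>f (X j \<omega>)\<bar>) + Rj" by linarith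
  qed
  have "\<bar>\<xi> t \<omega>\<bar> \<le> \<bar>cc\<bar> + \<bar>x0\<bar> + 2 * (dt * (\<Sum>j<n. \<bar>f (X j \<omega>)\<bar>) + Rj)"
    by (rule skorokhod_bound[OF assms(3) tT path_facts(1-6)[OF assms(1)] R])
  then show ?thesis using cc_bound by linarith
qed

lemma I_cont:
  assumes "\<omega> \<in> space P"
  shows "continuous_on {0..T} (\<lambda>s. I s \<omega>)"
proof -
  have cB: "continuous_on {0..} (\<lambda>t. B t \<omega>)" using bm assms unfolding brownian_motion_def by auto
  have c: "continuous_on {0..T} (\<lambda>s. B (min s c) \<omega>)" if "0 \<le> c" for c
  proof (rule continuous_on_compose2[OF cB])
    show "continuous_on {0..T} (\<lambda>s. min s c)" by (intro continuous_on_min continuous_on_id continuous_on_const)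
    show "(\<lambda>s. min s c) ` {0..T} \<subseteq> {0..}" using that by auto
  qed
  show ?thesis unfolding I_sum
    by (intro continuous_on_sum continuous_on_mult continuous_on_const continuous_on_diff c tk_nonneg)
qed

lemma comp_meas:
  assumes h: "continuous_on {cc..} h" and X: "Y \<in> borel_measurable K" and ge: "\<And>\<omega>. \<omega> \<in> space K \<Longrightarrow> cc \<le> Y \<omega>"
  shows "(\<lambda>\<omega>. h (Y \<omega>)) \<in> borel_measurable K"
proof -
  have "continuous_on UNIV (\<lambda>x. h (max x cc))"
  proof (rule continuous_on_compose2[OF h])
    show "continuous_on UNIV (\<lambda>x. max x cc)" by (intro continuous_on_max continuous_on_id continuous_on_const)
  qed auto
  then have "(\<lambda>x. h (max x cc)) \<in> borel_measurable borel" by (rule borel_measurable_continuous_onI)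
  then have m: "(\<lambda>\<omega>. h (max (Y \<omega>) cc)) \<in> borel_measurable K" by (rule measurable_compose[OF X])
  have e: "\<And>\<omega>. \<omega> \<in> space K \<Longrightarrow> h (max (Y \<omega>) cc) = h (Y \<omega>)" using ge by (simp add: max_absorb1)
  show ?thesis using measurable_cong[of K "\<lambda>\<omega>. h (max (Y \<omega>) cc)" "\<lambda>\<omega>. h (Y \<omega>)" borel] e m by simp
qed

lemma gX_meas: "k \<le> M \<Longrightarrow> tk k \<le> t \<Longrightarrow> (\<lambda>\<omega>. g (X k \<omega>)) \<in> borel_measurable (F t)"
proof -
  assume a1: "k \<le> M" "tk k \<le> t"
  then have t0: "0 \<le> t" using tk_nonneg[of k] by linarith
  show ?thesis
  proof (rule comp_meas[OF gcont[folded cc_def] X_meas[OF a1]])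
    fix \<omega> assume "\<omega> \<in> space (F t)"
    then have "\<omega> \<in> space P" using space_F[OF t0] by simp
    then show "cc \<le> X k \<omega>" using X_ge a1 by blast
  qed
qed

lemma fX_meas: "k \<le> M \<Longrightarrow> tk k \<le> t \<Longrightarrow> (\<lambda>\<omega>. f (X k \<omega>)) \<in> borel_measurable (F t)"
proof -
  assume a1: "k \<le> M" "tk k \<le> t"
  then have t0: "0 \<le> t" using tk_nonneg[of k] by linarith
  show ?thesis
  proof (rule comp_meas[OF fcont[folded cc_def] X_meas[OF a1]])
    fix \<omega> assume "\<omega> \<in> space (F t)"
    then have "\<omega> \<in> space P" using space_F[OF t0] by simp
    then show "cc \<le> X k \<omega>" using X_ge a1 by blast
  qed
qed

lemma I_meas:
  assumes "0 \<le> s" "s \<le> T"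
  shows "I s \<in> borel_measurable (F s)"
proof -
  obtain k where k: "k < M" "tk k \<le> s" "s \<le> tk (Suc k)"
    using grid_locate[of s M] assms tk_M by auto
  have eq: "I s = (\<lambda>\<omega>. (\<Sum>j<k. g (X j \<omega>) * (B (tk (Suc j)) \<omega> - B (tk j) \<omega>)) + g (X k \<omega>) * (B s \<omega> - B (tk k) \<omega>))"
    using I_formula[OF k] by auto
  have m1: "(\<lambda>\<omega>. g (X j \<omega>)) \<in> borel_measurable (F s)" "B (tk j) \<in> borel_measurable (F s)"
    "B (tk (Suc j)) \<in> borel_measurable (F s)" if "j < k" for j
  proof -
    have "tk (Suc j) \<le> tk k" "tk j \<le> tk (Suc j)" using that by (auto intro: tk_mono)
    then show "(\<lambda>\<omega>. g (X j \<omega>)) \<in> borel_measurable (F s)" "B (tk j) \<in> borel_measurable (F s)"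
      "B (tk (Suc j)) \<in> borel_measurable (F s)"
      using k that by (auto intro!: gX_meas B_meas tk_nonneg)
  qed
  have m2: "(\<lambda>\<omega>. g (X k \<omega>)) \<in> borel_measurable (F s)" "B (tk k) \<in> borel_measurable (F s)"
    "B s \<in> borel_measurable (F s)"
    using k assms by (auto intro!: gX_meas B_meas tk_nonneg)
  show ?thesis unfolding eq
    by (intro borel_measurable_add borel_measurable_sum borel_measurable_times borel_measurable_diff m2)
      (simp_all add: m1)
qed

end

context abep_inf begin

abbreviation "E h \<equiv> (\<integral>\<omega>. h \<omega> \<partial>P)"

lemma fm: "finite_measure P" using prob_space.finite_measure[OF ps] .

lemma int_const[simp]: "integrable P (\<lambda>\<omega>. c::real)" using finite_measure.integrable_const[OF fm] .

lemma E_const[simp]: "E (\<lambda>\<omega>. c) = (c::real)"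
  using prob_space.prob_space[OF ps] by simp

lemma indep_mult:
  fixes Z :: "'w \<Rightarrow> real" and \<phi> :: "real \<Rightarrow> real"
  assumes s: "0 \<le> s" "s \<le> s'" and Z: "Z \<in> borel_measurable (F s)" and phi: "\<phi> \<in> borel_measurable borel"
    and iZ: "integrable P Z" and iD: "integrable P (\<lambda>\<omega>. \<phi> (B s' \<omega> - B s \<omega>))"
  shows "integrable P (\<lambda>\<omega>. Z \<omega> * \<phi> (B s' \<omega> - B s \<omega>))"
    "E (\<lambda>\<omega>. Z \<omega> * \<phi> (B s' \<omega> - B s \<omega>)) = E Z * E (\<lambda>\<omega>. \<phi> (B s' \<omega> - B s \<omega>))"
proof -
  have "integrable P (\<lambda>\<omega>. Z \<omega> * \<phi> (B s' \<omega> - B s \<omega>)) \<and>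
        E (\<lambda>\<omega>. Z \<omega> * \<phi> (B s' \<omega> - B s \<omega>)) = E Z * E (\<lambda>\<omega>. \<phi> (B s' \<omega> - B s \<omega>))"
  proof (cases "s = s'")
    case True
    have i1: "E (\<lambda>\<omega>. \<phi> (B s' \<omega> - B s \<omega>)) = \<phi> 0"
      using True prob_space.prob_space[OF ps] by simp
    show ?thesis using True iZ i1 by simp
  next
    case False
    with s have lt: "s < s'" by auto
    define D where "D = (\<lambda>\<omega>. B s' \<omega> - B s \<omega>)"
    have ind: "prob_space.indep_set P (sets (F s)) (sets (vimage_algebra (space P) D borel))"
      using bm lt s unfolding brownian_motion_def D_def by blast
    have sF: "space (F s) = space P" using space_F s by simp
    have Dm: "D \<in> borel_measurable P" unfolding D_def
      using s meas_P[OF _ B_meas[of s' s']] meas_P[OF _ B_meas[of s s]] by (intro borel_measurable_diff) auto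
    have PDm: "(\<lambda>\<omega>. \<phi> (D \<omega>)) \<in> borel_measurable P" by (rule measurable_compose[OF Dm phi])
    have Zm: "Z \<in> borel_measurable P" using meas_P[OF s(1) Z] .
    have sub1: "sigma_sets (space P) {Z -` A \<inter> space P | A. A \<in> sets borel} \<subseteq> sets (F s)"
    proof -
      have "{Z -` A \<inter> space P | A. A \<in> sets borel} \<subseteq> sets (F s)"
        using measurable_sets[OF Z] sF by auto
      from sets.sigma_sets_subset[OF this] show ?thesis using sF by simp
    qed
    have sub2: "sigma_sets (space P) {(\<lambda>\<omega>. \<phi> (D \<omega>)) -` A \<inter> space P | A. A \<in> sets borel}
        \<subseteq> sets (vimage_algebra (space P) D borel)"
    proof -
      have "{(\<lambda>\<omega>. \<phi> (D \<omega>)) -` A \<inter> space P | A. A \<in> sets borel} \<subseteq> sets (vimage_algebra (space P) D borel)"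
      proof
        fix x assume "x \<in> {(\<lambda>\<omega>. \<phi> (D \<omega>)) -` A \<inter> space P | A. A \<in> sets borel}"
        then obtain A where A: "A \<in> sets borel" "x = (\<lambda>\<omega>. \<phi> (D \<omega>)) -` A \<inter> space P" by auto
        have "\<phi> -` A \<inter> space borel \<in> sets borel" using measurable_sets[OF phi A(1)] .
        then have "\<phi> -` A \<in> sets borel" by simp
        moreover have "x = D -` (\<phi> -` A) \<inter> space P" using A by auto
        ultimately show "x \<in> sets (vimage_algebra (space P) D borel)"
          by (subst sets_vimage_algebra2) auto
      qed
      from sets.sigma_sets_subset[OF this] show ?thesis by simp
    qed
    have "prob_space.indep_var P borel Z borel (\<lambda>\<omega>. \<phi> (D \<omega>))"
    proof -
      have "prob_space.indep_set P (sigma_sets (space P) {Z -` A \<inter> space P | A. A \<in> sets borel})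
          (sigma_sets (space P) {(\<lambda>\<omega>. \<phi> (D \<omega>)) -` A \<inter> space P | A. A \<in> sets borel})"
        using ind sub1 sub2 unfolding prob_space.indep_sets2_eq[OF ps] by blast
      then show ?thesis unfolding prob_space.indep_var_eq[OF ps] using Zm PDm by simp
    qed
    then show ?thesis
      using prob_space.indep_var_lebesgue_integral[OF ps _ iZ] prob_space.indep_var_integrable[OF ps _ iZ]
        iD unfolding D_def by simp
  qed
  then show "integrable P (\<lambda>\<omega>. Z \<omega> * \<phi> (B s' \<omega> - B s \<omega>))"
    "E (\<lambda>\<omega>. Z \<omega> * \<phi> (B s' \<omega> - B s \<omega>)) = E Z * E (\<lambda>\<omega>. \<phi> (B s' \<omega> - B s \<omega>))" by auto
qed

lemma D_moments:
  assumes s: "0 \<le> s" "s \<le> s'"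
  shows "integrable P (\<lambda>\<omega>. (B s' \<omega> - B s \<omega>)^j)"
    "E (\<lambda>\<omega>. (B s' \<omega> - B s \<omega>)^(2*k)) = (s' - s)^k * (fact (2*k) / (2^k * fact k))"
    "E (\<lambda>\<omega>. (B s' \<omega> - B s \<omega>)^(2*k+1)) = 0"
proof -
  have all: "integrable P (\<lambda>\<omega>. (B s' \<omega> - B s \<omega>)^j) \<and>
    E (\<lambda>\<omega>. (B s' \<omega> - B s \<omega>)^(2*k)) = (s' - s)^k * (fact (2*k) / (2^k * fact k)) \<and>
    E (\<lambda>\<omega>. (B s' \<omega> - B s \<omega>)^(2*k+1)) = 0"
  proof (cases "s = s'")
    case True
    have "E (\<lambda>\<omega>. (0::real)^(2*k)) = (s' - s)^k * (fact (2*k) / (2^k * fact k))"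
      using True prob_space.prob_space[OF ps] by (cases k) auto
    then show ?thesis using True by simp
  next
    case False
    then have lt: "s < s'" using s by auto
    define \<sigma> where "\<sigma> = sqrt (s' - s)"
    have sp: "0 < \<sigma>" unfolding \<sigma>_def using lt by simp
    have s2: "\<sigma>^2 = s' - s" unfolding \<sigma>_def using lt by simp
    have dist: "distributed P lborel (\<lambda>\<omega>. B s' \<omega> - B s \<omega>) (normal_density 0 \<sigma>)"
      using bm lt s unfolding brownian_motion_def \<sigma>_def by blast
    have pm: "(\<lambda>x::real. x^n) \<in> borel_measurable lborel" for n by simp
    have int: "integrable P (\<lambda>\<omega>. (B s' \<omega> - B s \<omega>)^n)" for n
      using distributed_integrable[OF dist pm, of n] integrable_normal_moment[OF sp, of 0 n] by simp
    have ev: "E (\<lambda>\<omega>. (B s' \<omega> - B s \<omega>)^n) = (\<integral>x. normal_density 0 \<sigma> x * x^n \<partial>lborel)" for n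
      using distributed_integral[OF dist pm, of n] by simp
    have e1: "(\<integral>x. normal_density 0 \<sigma> x * x^(2*k) \<partial>lborel) = fact (2 * k) / ((2 / \<sigma>\<^sup>2)^k * fact k)"
      using integral_normal_moment_even[OF sp, of 0 k] by simp
    have "fact (2 * k) / ((2 / \<sigma>\<^sup>2)^k * fact k) = (s' - s)^k * (fact (2*k) / (2^k * fact k))"
      using sp unfolding s2[symmetric] by (simp add: power_divide field_simps)
    moreover have e2: "(\<integral>x. normal_density 0 \<sigma> x * x^(2*k+1) \<partial>lborel) = 0"
      using integral_normal_moment_odd[OF sp, of 0 k] by simp
    ultimately show ?thesis using int ev[of "2*k"] ev[of "2*k+1"] e1 by simp
  qed
  then show "integrable P (\<lambda>\<omega>. (B s' \<omega> - B s \<omega>)^j)"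
    "E (\<lambda>\<omega>. (B s' \<omega> - B s \<omega>)^(2*k)) = (s' - s)^k * (fact (2*k) / (2^k * fact k))"
    "E (\<lambda>\<omega>. (B s' \<omega> - B s \<omega>)^(2*k+1)) = 0" by auto
qed

end

context abep_inf begin

lemma int_dom:
  fixes h Ub :: "'w \<Rightarrow> real"
  assumes "integrable P Ub" "h \<in> borel_measurable P" "\<And>\<omega>. \<omega> \<in> space P \<Longrightarrow> \<bar>h \<omega>\<bar> \<le> Ub \<omega>"
  shows "integrable P h"
proof (rule Bochner_Integration.integrable_bound[OF assms(1,2)])
  show "AE x in P. norm (h x) \<le> norm (Ub x)" using assms(3) by (intro AE_I2) force
qed

lemma even_pow_abs: "\<bar>x::real\<bar>^(2*r) = x^(2*r)"
  by (simp add: power_even_abs)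

definition "Kc r = 2^(2*r) * (1 + fact (2*r) * T^(r-1))"

lemma Kc_nonneg: "0 \<le> Kc r" unfolding Kc_def using Tpos by simp

lemma D_abs_moment:
  assumes s: "0 \<le> s" "s \<le> s'" "s' - s \<le> T" and j: "2 \<le> j" "j \<le> 2*r"
  shows "E (\<lambda>\<omega>. \<bar>B s' \<omega> - B s \<omega>\<bar>^j) \<le> (s' - s) * (1 + fact (2*r) * T^(r-1))"
proof -
  let ?D = "\<lambda>\<omega>. B s' \<omega> - B s \<omega>"
  have r1: "r \<ge> 1" using j by auto
  have i2: "integrable P (\<lambda>\<omega>. ?D \<omega>^2)" and iq: "integrable P (\<lambda>\<omega>. ?D \<omega>^(2*r))" using D_moments(1)[OF s(1,2)] by auto
  have "E (\<lambda>\<omega>. \<bar>?D \<omega>\<bar>^j) \<le> E (\<lambda>\<omega>. ?D \<omega>^2 + ?D \<omega>^(2*r))"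
  proof (rule integral_mono')
    show "integrable P (\<lambda>\<omega>. ?D \<omega>^2 + ?D \<omega>^(2*r))" using i2 iq by (rule Bochner_Integration.integrable_add)
    fix \<omega>
    have "\<bar>?D \<omega>\<bar>^j \<le> (?D \<omega>)^2 + \<bar>?D \<omega>\<bar>^(2*r)" by (rule abs_pow_split[OF j])
    then show "\<bar>?D \<omega>\<bar>^j \<le> ?D \<omega>^2 + ?D \<omega>^(2*r)" by (simp only: even_pow_abs)
    have "0 \<le> ?D \<omega>^2" "0 \<le> ?D \<omega>^(2*r)" by (simp_all only: zero_le_power2 zero_le_even_power[of "2*r"] even_mult_iff even_numeral simp_thms)
    then show "0 \<le> ?D \<omega>^2 + ?D \<omega>^(2*r)" by linarith
  qed
  also have "\<dots> = E (\<lambda>\<omega>. ?D \<omega>^(2*1)) + E (\<lambda>\<omega>. ?D \<omega>^(2*r))" using i2 iq by simp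
  also have "\<dots> = (s' - s) + (s' - s)^r * (fact (2*r) / (2^r * fact r))"
    using D_moments(2)[OF s(1,2), of 1] D_moments(2)[OF s(1,2), of r] by simp
  also have "(s' - s)^r * (fact (2*r) / (2^r * fact r)) \<le> (s' - s) * T^(r-1) * fact (2*r)"
  proof -
    have "fact (2*r) / (2^r * fact r) \<le> (fact (2*r) :: real)"
    proof -
      have "(1::real) = 1 * 1" by simp
      also have "\<dots> \<le> 2^r * fact r" by (intro mult_mono) (auto simp: fact_ge_1)
      finally have "(1::real) \<le> 2^r * fact r" .
      then show ?thesis by (simp add: divide_le_eq mult_le_cancel_left1 fact_gt_zero)
    qed
    moreover have "(s' - s)^r \<le> (s' - s) * T^(r-1)"
    proof -
      have "(s' - s)^r = (s' - s) * (s' - s)^(r-1)" using r1 by (cases r) auto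
      also have "\<dots> \<le> (s' - s) * T^(r-1)" using s by (intro mult_left_mono power_mono) auto
      finally show ?thesis .
    qed
    moreover have "0 \<le> (s' - s) * T^(r-1)" using s Tpos by simp
    moreover have "0 \<le> (fact (2*r) / (2^r * fact r) :: real)" by simp
    ultimately have "(s' - s)^r * (fact (2*r) / (2^r * fact r)) \<le> ((s' - s) * T^(r-1)) * fact (2*r)"
      by (intro mult_mono) auto
    then show ?thesis by simp
  qed
  finally show ?thesis by (simp add: algebra_simps)
qed

lemma one_step:
  fixes Z1 G :: "'w \<Rightarrow> real"
  assumes s: "0 \<le> s" "s \<le> s'" "s' - s \<le> T" and r: "r \<ge> 1"
    and Zm: "Z1 \<in> borel_measurable (F s)" and Gm: "G \<in> borel_measurable (F s)"
    and iZ: "integrable P (\<lambda>\<omega>. Z1 \<omega>^(2*r))" and iG: "integrable P (\<lambda>\<omega>. G \<omega>^(2*r))"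
  shows "integrable P (\<lambda>\<omega>. (Z1 \<omega> + G \<omega> * (B s' \<omega> - B s \<omega>))^(2*r))"
    "E (\<lambda>\<omega>. (Z1 \<omega> + G \<omega> * (B s' \<omega> - B s \<omega>))^(2*r))
       \<le> E (\<lambda>\<omega>. Z1 \<omega>^(2*r)) + Kc r * (s' - s) * (E (\<lambda>\<omega>. Z1 \<omega>^(2*r)) + E (\<lambda>\<omega>. G \<omega>^(2*r)))"
proof -
  let ?D = "\<lambda>\<omega>. B s' \<omega> - B s \<omega>"
  let ?q = "2*r"
  define W where "W j \<omega> = G \<omega>^j * Z1 \<omega>^(?q - j)" for j \<omega>
  define c where "c j = real (?q choose j)" for j
  have ZmP: "Z1 \<in> borel_measurable P" "G \<in> borel_measurable P" using meas_P[OF s(1)] Zm Gm by auto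
  have Wm: "W j \<in> borel_measurable (F s)" for j unfolding W_def
    by (intro borel_measurable_times borel_measurable_power Zm Gm)
  have Wbound: "\<bar>W j \<omega>\<bar> \<le> Z1 \<omega>^?q + G \<omega>^?q" if "j \<le> ?q" for j \<omega>
  proof -
    have "\<bar>W j \<omega>\<bar> = \<bar>Z1 \<omega>\<bar>^(?q - j) * \<bar>G \<omega>\<bar>^j" unfolding W_def by (simp add: abs_mult power_abs)
    also have "\<dots> \<le> \<bar>Z1 \<omega>\<bar>^?q + \<bar>G \<omega>\<bar>^?q" by (rule pow_mix) (use that in auto)
    finally show ?thesis by (simp only: even_pow_abs)
  qed
  have iZG: "integrable P (\<lambda>\<omega>. Z1 \<omega>^?q + G \<omega>^?q)" using iZ iG by simp
  have iW: "integrable P (W j)" if "j \<le> ?q" for j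
    by (rule int_dom[OF iZG meas_P[OF s(1) Wm] Wbound[OF that]])
  have iabsW: "integrable P (\<lambda>\<omega>. \<bar>W j \<omega>\<bar>)" if "j \<le> ?q" for j using iW[OF that] by (rule integrable_abs)
  have EabsW: "E (\<lambda>\<omega>. \<bar>W j \<omega>\<bar>) \<le> E (\<lambda>\<omega>. Z1 \<omega>^?q) + E (\<lambda>\<omega>. G \<omega>^?q)" if "j \<le> ?q" for j
  proof -
    have "E (\<lambda>\<omega>. \<bar>W j \<omega>\<bar>) \<le> E (\<lambda>\<omega>. Z1 \<omega>^?q + G \<omega>^?q)"
      by (rule integral_mono[OF iabsW[OF that] iZG]) (use Wbound that in auto)
    then show ?thesis using iZ iG by simp
  qed
  have pm: "(\<lambda>d::real. d^j) \<in> borel_measurable borel" for j by simp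
  have iWD: "integrable P (\<lambda>\<omega>. W j \<omega> * ?D \<omega>^j)" and EWD: "E (\<lambda>\<omega>. W j \<omega> * ?D \<omega>^j) = E (W j) * E (\<lambda>\<omega>. ?D \<omega>^j)"
    if "j \<le> ?q" for j
    using indep_mult[OF s(1,2) Wm pm iW[OF that] D_moments(1)[OF s(1,2)]] by blast+
  have expand: "(Z1 \<omega> + G \<omega> * ?D \<omega>)^?q = (\<Sum>j\<le>?q. c j * (W j \<omega> * ?D \<omega>^j))" for \<omega>
  proof -
    have "(Z1 \<omega> + G \<omega> * ?D \<omega>)^?q = (G \<omega> * ?D \<omega> + Z1 \<omega>)^?q" by (simp add: add.commute)
    also have "\<dots> = (\<Sum>j\<le>?q. of_nat (?q choose j) * (G \<omega> * ?D \<omega>)^j * Z1 \<omega>^(?q - j))"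
      by (rule binomial_ring)
    also have "\<dots> = (\<Sum>j\<le>?q. c j * (W j \<omega> * ?D \<omega>^j))"
      by (intro sum.cong refl) (simp add: W_def c_def power_mult_distrib mult_ac)
    finally show ?thesis .
  qed
  have iT: "integrable P (\<lambda>\<omega>. c j * (W j \<omega> * ?D \<omega>^j))" if "j \<in> {..?q}" for j
    using iWD[of j] that by (intro integrable_mult_right) auto
  have int: "integrable P (\<lambda>\<omega>. \<Sum>j\<le>?q. c j * (W j \<omega> * ?D \<omega>^j))"
    by (rule Bochner_Integration.integrable_sum[OF iT])
  then show "integrable P (\<lambda>\<omega>. (Z1 \<omega> + G \<omega> * ?D \<omega>)^?q)" unfolding expand .
  have Eexp: "E (\<lambda>\<omega>. (Z1 \<omega> + G \<omega> * ?D \<omega>)^?q) = (\<Sum>j\<le>?q. c j * (E (W j) * E (\<lambda>\<omega>. ?D \<omega>^j)))"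
  proof -
    have "E (\<lambda>\<omega>. (Z1 \<omega> + G \<omega> * ?D \<omega>)^?q) = (\<Sum>j\<le>?q. E (\<lambda>\<omega>. c j * (W j \<omega> * ?D \<omega>^j)))"
      unfolding expand by (rule Bochner_Integration.integral_sum[OF iT])
    also have "\<dots> = (\<Sum>j\<le>?q. c j * (E (W j) * E (\<lambda>\<omega>. ?D \<omega>^j)))"
      by (intro sum.cong refl) (simp only: integral_mult_right_zero EWD atMost_iff)
    finally show ?thesis .
  qed
  define Cb where "Cb = (E (\<lambda>\<omega>. Z1 \<omega>^?q) + E (\<lambda>\<omega>. G \<omega>^?q)) * ((s' - s) * (1 + fact ?q * T^(r-1)))"
  have EZ0: "0 \<le> E (\<lambda>\<omega>. Z1 \<omega>^?q)" "0 \<le> E (\<lambda>\<omega>. G \<omega>^?q)"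
    by (intro integral_nonneg_AE AE_I2, simp add: zero_le_even_power)+
  have Cb0: "0 \<le> Cb" unfolding Cb_def using EZ0 s Tpos by (intro mult_nonneg_nonneg) auto
  have c0: "0 \<le> c j" for j unfolding c_def by simp
  have tm: "c j * (E (W j) * E (\<lambda>\<omega>. ?D \<omega>^j)) \<le> (if j = 0 then E (\<lambda>\<omega>. Z1 \<omega>^?q) else 0) + c j * Cb"
    if "j \<le> ?q" for j
  proof (cases "j = 0")
    case True
    then show ?thesis using c0[of j] Cb0 prob_space.prob_space[OF ps] unfolding c_def W_def by simp
  next
    case False
    show ?thesis
    proof (cases "j = 1")
      case True
      have "E (\<lambda>\<omega>. ?D \<omega>^(2*0+1)) = 0" by (rule D_moments(3)[OF s(1,2)])
      then show ?thesis using True c0[of j] Cb0 by simp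
    next
      case False2: False
      then have j2: "2 \<le> j" using False by auto
      have "E (W j) * E (\<lambda>\<omega>. ?D \<omega>^j) \<le> \<bar>E (W j)\<bar> * \<bar>E (\<lambda>\<omega>. ?D \<omega>^j)\<bar>"
        by (simp add: abs_mult[symmetric])
      also have "\<dots> \<le> E (\<lambda>\<omega>. \<bar>W j \<omega>\<bar>) * E (\<lambda>\<omega>. \<bar>?D \<omega>\<bar>^j)"
      proof (intro mult_mono)
        show "\<bar>E (W j)\<bar> \<le> E (\<lambda>\<omega>. \<bar>W j \<omega>\<bar>)" by (rule integral_abs_bound)
        have "\<bar>E (\<lambda>\<omega>. ?D \<omega>^j)\<bar> \<le> E (\<lambda>\<omega>. \<bar>?D \<omega>^j\<bar>)" by (rule integral_abs_bound)
        then show "\<bar>E (\<lambda>\<omega>. ?D \<omega>^j)\<bar> \<le> E (\<lambda>\<omega>. \<bar>?D \<omega>\<bar>^j)" by (simp add: power_abs)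
        show "0 \<le> E (\<lambda>\<omega>. \<bar>W j \<omega>\<bar>)" by (intro integral_nonneg_AE AE_I2) simp
      qed simp
      also have "\<dots> \<le> (E (\<lambda>\<omega>. Z1 \<omega>^?q) + E (\<lambda>\<omega>. G \<omega>^?q)) * ((s' - s) * (1 + fact ?q * T^(r-1)))"
        by (intro mult_mono EabsW D_abs_moment s j2 that) (auto intro!: integral_nonneg_AE simp: EZ0)
      finally show ?thesis using c0[of j] False unfolding Cb_def by (simp add: mult_left_mono)
    qed
  qed
  have "E (\<lambda>\<omega>. (Z1 \<omega> + G \<omega> * ?D \<omega>)^?q) \<le> (\<Sum>j\<le>?q. (if j = 0 then E (\<lambda>\<omega>. Z1 \<omega>^?q) else 0) + c j * Cb)"
    unfolding Eexp by (intro sum_mono tm) auto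
  also have "\<dots> = E (\<lambda>\<omega>. Z1 \<omega>^?q) + 2^?q * Cb"
  proof -
    have "(\<Sum>j\<le>?q. (if j = 0 then E (\<lambda>\<omega>. Z1 \<omega>^?q) else 0)) = E (\<lambda>\<omega>. Z1 \<omega>^?q)"
      by (subst sum.delta) auto
    moreover have "(\<Sum>j\<le>?q. c j * Cb) = 2^?q * Cb"
    proof -
      have "(\<Sum>j\<le>?q. c j) = real (\<Sum>j\<le>?q. ?q choose j)" unfolding c_def by simp
      also have "\<dots> = 2^?q" by (simp only: choose_row_sum of_nat_power of_nat_numeral)
      finally show ?thesis by (simp add: sum_distrib_right[symmetric])
    qed
    ultimately show ?thesis by (simp add: sum.distrib)
  qed
  also have "2^?q * Cb = Kc r * (s' - s) * (E (\<lambda>\<omega>. Z1 \<omega>^?q) + E (\<lambda>\<omega>. G \<omega>^?q))"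
    unfolding Cb_def Kc_def by (simp add: algebra_simps)
  finally show "E (\<lambda>\<omega>. (Z1 \<omega> + G \<omega> * ?D \<omega>)^?q)
       \<le> E (\<lambda>\<omega>. Z1 \<omega>^?q) + Kc r * (s' - s) * (E (\<lambda>\<omega>. Z1 \<omega>^?q) + E (\<lambda>\<omega>. G \<omega>^?q))" .
qed

end

context abep_inf begin

lemma I_meas_P: "0 \<le> s \<Longrightarrow> s \<le> T \<Longrightarrow> I s \<in> borel_measurable P"
  using meas_P I_meas by blast

lemma I_moment_grid:
  assumes r: "r \<ge> 1" and n: "n \<le> M" and ig: "\<And>k. k < n \<Longrightarrow> integrable P (\<lambda>\<omega>. g (X k \<omega>)^(2*r))"
  shows "integrable P (\<lambda>\<omega>. I (tk n) \<omega>^(2*r)) \<and>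
    E (\<lambda>\<omega>. I (tk n) \<omega>^(2*r)) \<le> (1 + Kc r * dt)^n * (Kc r * dt) * (\<Sum>k<n. E (\<lambda>\<omega>. g (X k \<omega>)^(2*r)))"
  using n ig
proof (induction n)
  case 0
  have "(0::real)^(2*r) = 0" using r by simp
  then show ?case using r by (simp add: I_0 power_0_left)
next
  case (Suc n)
  let ?K = "Kc r * dt"
  let ?\<gamma> = "\<lambda>k. E (\<lambda>\<omega>. g (X k \<omega>)^(2*r))"
  have IH: "integrable P (\<lambda>\<omega>. I (tk n) \<omega>^(2*r))" "E (\<lambda>\<omega>. I (tk n) \<omega>^(2*r)) \<le> (1 + ?K)^n * ?K * (\<Sum>k<n. ?\<gamma> k)"
    using Suc by auto
  have nM: "n < M" using Suc by auto
  have tn: "0 \<le> tk n" "tk n \<le> tk (Suc n)" "tk (Suc n) - tk n \<le> T" using tk_nonneg tk_Suc dt_le_T dt_pos by auto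
  have eq: "I (tk (Suc n)) \<omega> = I (tk n) \<omega> + g (X n \<omega>) * (B (tk (Suc n)) \<omega> - B (tk n) \<omega>)" for \<omega>
    using I_incr[OF nM order_refl tn(2) order_refl, of \<omega>] by simp
  have Zm: "I (tk n) \<in> borel_measurable (F (tk n))" using I_meas tn tk_le_T nM by simp
  have Gm: "(\<lambda>\<omega>. g (X n \<omega>)) \<in> borel_measurable (F (tk n))" using gX_meas nM by simp
  have ign: "integrable P (\<lambda>\<omega>. g (X n \<omega>)^(2*r))" using Suc by auto
  note os = one_step[OF tn r Zm Gm IH(1) ign]
  have i1: "integrable P (\<lambda>\<omega>. I (tk (Suc n)) \<omega>^(2*r))" unfolding eq using os(1) .
  have "E (\<lambda>\<omega>. I (tk (Suc n)) \<omega>^(2*r)) \<le> E (\<lambda>\<omega>. I (tk n) \<omega>^(2*r)) + Kc r * (tk (Suc n) - tk n) * (E (\<lambda>\<omega>. I (tk n) \<omega>^(2*r)) + ?\<gamma> n)"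
    unfolding eq using os(2) .
  also have "\<dots> = (1 + ?K) * E (\<lambda>\<omega>. I (tk n) \<omega>^(2*r)) + ?K * ?\<gamma> n"
    by (simp add: tk_Suc algebra_simps)
  also have "\<dots> \<le> (1 + ?K) * ((1 + ?K)^n * ?K * (\<Sum>k<n. ?\<gamma> k)) + (1 + ?K)^(Suc n) * ?K * ?\<gamma> n"
  proof (intro add_mono mult_left_mono IH(2))
    have K0: "0 \<le> ?K" using Kc_nonneg dt_pos by simp
    have g0: "0 \<le> ?\<gamma> n" by (intro integral_nonneg_AE AE_I2) (simp add: zero_le_even_power)
    have "1 \<le> (1 + ?K)^(Suc n)" using K0 by (intro one_le_power) simp
    then have "1 * (?K * ?\<gamma> n) \<le> (1 + ?K)^(Suc n) * (?K * ?\<gamma> n)"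
      using K0 g0 by (intro mult_right_mono) auto
    then show "?K * ?\<gamma> n \<le> (1 + ?K)^(Suc n) * ?K * ?\<gamma> n" by (simp add: mult_ac)
    show "0 \<le> 1 + ?K" using K0 by simp
  qed
  also have "\<dots> = (1 + ?K)^(Suc n) * ?K * (\<Sum>k<Suc n. ?\<gamma> k)"
    by (simp add: algebra_simps)
  finally show ?case using i1 by simp
qed

lemma I_moment_any:
  assumes r: "r \<ge> 1" and n: "n \<le> M" and ig: "\<And>k. k < n \<Longrightarrow> integrable P (\<lambda>\<omega>. g (X k \<omega>)^(2*r))"
    and s: "0 \<le> s" "s \<le> tk n"
  shows "integrable P (\<lambda>\<omega>. I s \<omega>^(2*r))"
proof -
  obtain k where k: "k < M" "tk k \<le> s" "s \<le> tk (Suc k)" "k < n \<or> s = 0"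
    using grid_locate[OF s n] by blast
  show ?thesis
  proof (cases "s = 0")
    case True
    have "(0::real)^(2*r) = 0" using r by simp
    then show ?thesis using True r by (simp add: I_0 power_0_left)
  next
    case False
    then have kn: "k < n" using k by auto
    have tn: "0 \<le> tk k" "tk k \<le> s" "s - tk k \<le> T" using tk_nonneg k tk_Suc dt_le_T dt_pos by auto
    have eq: "I s \<omega> = I (tk k) \<omega> + g (X k \<omega>) * (B s \<omega> - B (tk k) \<omega>)" for \<omega>
      using I_incr[OF k(1) order_refl k(2) k(3), of \<omega>] by simp
    have Zm: "I (tk k) \<in> borel_measurable (F (tk k))" using I_meas tn tk_le_T k by simp
    have Gm: "(\<lambda>\<omega>. g (X k \<omega>)) \<in> borel_measurable (F (tk k))" using gX_meas k by simp
    have iZ: "integrable P (\<lambda>\<omega>. I (tk k) \<omega>^(2*r))" using I_moment_grid[OF r, of k] ig kn n by auto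
    have ign: "integrable P (\<lambda>\<omega>. g (X k \<omega>)^(2*r))" using ig kn by auto
    show ?thesis unfolding eq using one_step(1)[OF tn r Zm Gm iZ ign] .
  qed
qed

end

lemma ab_le_sq: "(a::real) * b \<le> a^2 + b^2"
proof -
  have "2 * a * b \<le> a^2 + b^2" by (rule sum_squares_bound)
  moreover have "0 \<le> a^2" "0 \<le> b^2" by simp_all
  ultimately show ?thesis by (cases "a * b \<ge> 0") linarith+
qed

context abep_inf begin

lemma doob_finite:
  fixes \<sigma> :: "nat \<Rightarrow> real" and Lx r :: nat
  assumes r: "r \<ge> 1"
    and \<sigma>r: "\<And>i. i \<le> Lx \<Longrightarrow> 0 \<le> \<sigma> i \<and> \<sigma> i \<le> T"
    and \<sigma>m: "\<And>i j. i \<le> j \<Longrightarrow> j \<le> Lx \<Longrightarrow> \<sigma> i \<le> \<sigma> j"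
    and step: "\<And>i. i < Lx \<Longrightarrow> \<exists>k<M. tk k \<le> \<sigma> i \<and> \<sigma> (Suc i) \<le> tk (Suc k) \<and> integrable P (\<lambda>\<omega>. g (X k \<omega>)^(2*r))"
    and iI: "\<And>i. i \<le> Lx \<Longrightarrow> integrable P (\<lambda>\<omega>. I (\<sigma> i) \<omega>^(2*r))"
  shows "integrable P (\<lambda>\<omega>. (Max ((\<lambda>i. \<bar>I (\<sigma> i) \<omega>\<bar>^r) ` {..Lx}))^2)"
    "E (\<lambda>\<omega>. (Max ((\<lambda>i. \<bar>I (\<sigma> i) \<omega>\<bar>^r) ` {..Lx}))^2) \<le> 4 * E (\<lambda>\<omega>. I (\<sigma> Lx) \<omega>^(2*r))"
proof -
  define x where "x i \<omega> = \<bar>I (\<sigma> i) \<omega>\<bar>^r" for i \<omega>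
  define m where "m i \<omega> = Max ((\<lambda>j. x j \<omega>) ` {..i})" for i \<omega>
  define S where "S \<omega> = (\<Sum>j\<le>Lx. I (\<sigma> j) \<omega>^(2*r))" for \<omega>
  have x2: "(x i \<omega>)^2 = I (\<sigma> i) \<omega>^(2*r)" for i \<omega>
    unfolding x_def by (simp add: power_mult[symmetric] power_even_abs mult.commute)
  have x0: "0 \<le> x i \<omega>" for i \<omega> unfolding x_def by simp
  have m_in: "\<exists>j\<le>i. m i \<omega> = x j \<omega>" for i \<omega>
  proof -
    have "m i \<omega> \<in> (\<lambda>j. x j \<omega>) ` {..i}" unfolding m_def by (rule Max_in) auto
    then show ?thesis by auto
  qed
  have mge: "j \<le> i \<Longrightarrow> x j \<omega> \<le> m i \<omega>" for i j \<omega> unfolding m_def by (intro Max_ge) auto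
  have m0: "0 \<le> m i \<omega>" for i \<omega> using mge[of 0 i \<omega>] x0[of 0 \<omega>] by simp
  have xS: "i \<le> Lx \<Longrightarrow> (x i \<omega>)^2 \<le> S \<omega>" for i \<omega>
    unfolding x2 S_def by (rule member_le_sum) (auto simp: zero_le_even_power)
  have mS: "i \<le> Lx \<Longrightarrow> (m i \<omega>)^2 \<le> S \<omega>" for i \<omega>
    using m_in[of i \<omega>] xS by force
  have iS: "integrable P S" unfolding S_def using iI by (intro Bochner_Integration.integrable_sum) auto
  have S0: "0 \<le> S \<omega>" for \<omega> unfolding S_def by (intro sum_nonneg) (simp add: zero_le_even_power)
  have xm: "x j \<in> borel_measurable (F (\<sigma> i))" if "j \<le> i" "i \<le> Lx" for i j
  proof -
    have "I (\<sigma> j) \<in> borel_measurable (F (\<sigma> j))" using I_meas \<sigma>r that by auto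
    moreover have "0 \<le> \<sigma> j" "\<sigma> j \<le> \<sigma> i" using \<sigma>r \<sigma>m that by auto
    ultimately have "I (\<sigma> j) \<in> borel_measurable (F (\<sigma> i))" using meas_mono by blast
    then show ?thesis unfolding x_def by (intro borel_measurable_power borel_measurable_abs)
  qed
  have mm: "m i \<in> borel_measurable (F (\<sigma> i))" if "i \<le> Lx" for i
    unfolding m_def using xm that by (intro borel_measurable_Max) auto
  have mP: "m i \<in> borel_measurable P" "x i \<in> borel_measurable P" if "i \<le> Lx" for i
  proof -
    have "0 \<le> \<sigma> i" using \<sigma>r that by auto
    then show "m i \<in> borel_measurable P" "x i \<in> borel_measurable P"
      using meas_P mm[OF that] xm[OF order_refl that] by blast+
  qed
  have mx_eq: "(\<lambda>\<omega>. (Max ((\<lambda>i. \<bar>I (\<sigma> i) \<omega>\<bar>^r) ` {..Lx}))^2) = (\<lambda>\<omega>. (m Lx \<omega>)^2)"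
    unfolding m_def x_def by simp
  have imx: "integrable P (\<lambda>\<omega>. (m Lx \<omega>)^2)"
    by (rule int_dom[OF iS]) (use mP mS in auto)
  then show "integrable P (\<lambda>\<omega>. (Max ((\<lambda>i. \<bar>I (\<sigma> i) \<omega>\<bar>^r) ` {..Lx}))^2)" unfolding mx_eq .
  define tm where "tm i \<omega> = m i \<omega> * (x (Suc i) \<omega> - x i \<omega>)" for i \<omega>
  have itm: "integrable P (tm i)" and Etm: "0 \<le> E (tm i)" if iL: "i < Lx" for i
  proof -
    obtain k where k: "k < M" "tk k \<le> \<sigma> i" "\<sigma> (Suc i) \<le> tk (Suc k)" "integrable P (\<lambda>\<omega>. g (X k \<omega>)^(2*r))"
      using step iL by blast
    have si: "0 \<le> \<sigma> i" "\<sigma> i \<le> \<sigma> (Suc i)" using \<sigma>r \<sigma>m iL by auto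
    define Zi where "Zi \<omega> = m i \<omega> * (real r * \<bar>I (\<sigma> i) \<omega>\<bar>^(r-1) * sgn (I (\<sigma> i) \<omega>)) * g (X k \<omega>)" for \<omega>
    define Di where "Di \<omega> = B (\<sigma> (Suc i)) \<omega> - B (\<sigma> i) \<omega>" for \<omega>
    have pw: "Zi \<omega> * Di \<omega> \<le> tm i \<omega>" for \<omega>
    proof -
      have inc: "I (\<sigma> (Suc i)) \<omega> - I (\<sigma> i) \<omega> = g (X k \<omega>) * Di \<omega>"
        unfolding Di_def by (rule I_incr[OF k(1,2) si(2) k(3)])
      have "real r * \<bar>I (\<sigma> i) \<omega>\<bar>^(r-1) * sgn (I (\<sigma> i) \<omega>) * (I (\<sigma> (Suc i)) \<omega> - I (\<sigma> i) \<omega>)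
          \<le> x (Suc i) \<omega> - x i \<omega>"
        unfolding x_def by (rule tangent_abs_pow[OF r])
      then have "m i \<omega> * (real r * \<bar>I (\<sigma> i) \<omega>\<bar>^(r-1) * sgn (I (\<sigma> i) \<omega>) * (g (X k \<omega>) * Di \<omega>))
          \<le> m i \<omega> * (x (Suc i) \<omega> - x i \<omega>)"
        unfolding inc by (intro mult_left_mono m0)
      then show ?thesis unfolding Zi_def tm_def by (simp add: mult_ac)
    qed
    have Zm: "Zi \<in> borel_measurable (F (\<sigma> i))"
    proof -
      have "I (\<sigma> i) \<in> borel_measurable (F (\<sigma> i))" using I_meas \<sigma>r iL by auto
      moreover have "(\<lambda>\<omega>. g (X k \<omega>)) \<in> borel_measurable (F (\<sigma> i))" using gX_meas k by auto
      moreover have "m i \<in> borel_measurable (F (\<sigma> i))" using mm iL by auto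
      ultimately show ?thesis unfolding Zi_def
        by (intro borel_measurable_times borel_measurable_const borel_measurable_power borel_measurable_abs
            measurable_compose[OF _ borel_measurable_sgn])
    qed
    have Zb: "\<bar>Zi \<omega>\<bar> \<le> real r * (S \<omega> + I (\<sigma> i) \<omega>^(2*r) + g (X k \<omega>)^(2*r))" for \<omega>
    proof -
      let ?a = "m i \<omega>" and ?b = "\<bar>I (\<sigma> i) \<omega>\<bar>^(r-1) * \<bar>g (X k \<omega>)\<bar>"
      have "\<bar>Zi \<omega>\<bar> \<le> real r * (?a * ?b)"
      proof -
        have "\<bar>Zi \<omega>\<bar> = real r * (?a * (\<bar>I (\<sigma> i) \<omega>\<bar>^(r-1) * \<bar>sgn (I (\<sigma> i) \<omega>)\<bar> * \<bar>g (X k \<omega>)\<bar>))"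
          unfolding Zi_def using m0[of i \<omega>] by (simp add: abs_mult mult_ac)
        also have "\<dots> \<le> real r * (?a * ?b)"
          by (intro mult_left_mono m0) (auto simp: abs_sgn_eq mult_le_cancel_left1)
        finally show ?thesis .
      qed
      also have "?a * ?b \<le> ?a^2 + ?b^2" by (rule ab_le_sq)
      also have "?b^2 = \<bar>I (\<sigma> i) \<omega>\<bar>^(2*r - 2) * \<bar>g (X k \<omega>)\<bar>^2"
        using r by (simp add: power_mult_distrib power_mult[symmetric] mult.commute right_diff_distrib')
      also have "\<dots> \<le> \<bar>I (\<sigma> i) \<omega>\<bar>^(2*r) + \<bar>g (X k \<omega>)\<bar>^(2*r)"
        using pow_mix[of "\<bar>I (\<sigma> i) \<omega>\<bar>" "\<bar>g (X k \<omega>)\<bar>" 2 "2*r"] r by simp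
      also have "?a^2 \<le> S \<omega>" using mS iL by auto
      finally show ?thesis using r by (simp add: even_pow_abs mult_left_mono add.assoc)
    qed
    have iZ: "integrable P Zi"
    proof (rule int_dom[OF _ meas_P[OF si(1) Zm] Zb])
      show "integrable P (\<lambda>\<omega>. real r * (S \<omega> + I (\<sigma> i) \<omega>^(2*r) + g (X k \<omega>)^(2*r)))"
        using iS iI[of i] k(4) iL by simp
    qed
    have idp: "(\<lambda>d::real. d) \<in> borel_measurable borel" by simp
    have iDi: "integrable P (\<lambda>\<omega>. Di \<omega>)" unfolding Di_def using D_moments(1)[OF si, of 1] by simp
    have ED: "E Di = 0" unfolding Di_def using D_moments(3)[OF si, of 0] by simp
    note im = indep_mult[OF si Zm idp iZ iDi[unfolded Di_def]]
    have iZD: "integrable P (\<lambda>\<omega>. Zi \<omega> * Di \<omega>)" using im(1) unfolding Di_def .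
    have EZD: "E (\<lambda>\<omega>. Zi \<omega> * Di \<omega>) = 0" using im(2) ED unfolding Di_def by simp
    have tb: "\<bar>tm i \<omega>\<bar> \<le> 4 * S \<omega>" for \<omega>
    proof -
      have "\<bar>tm i \<omega>\<bar> \<le> m i \<omega> * x (Suc i) \<omega> + m i \<omega> * x i \<omega>"
      proof -
        have "0 \<le> m i \<omega> * x (Suc i) \<omega>" "0 \<le> m i \<omega> * x i \<omega>" using m0[of i \<omega>] x0[of "Suc i" \<omega>] x0[of i \<omega>] by simp_all
        then show ?thesis unfolding tm_def right_diff_distrib by linarith
      qed
      also have "\<dots> \<le> ((m i \<omega>)^2 + (x (Suc i) \<omega>)^2) + ((m i \<omega>)^2 + (x i \<omega>)^2)"
        by (intro add_mono ab_le_sq)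
      also have "\<dots> \<le> 4 * S \<omega>" using mS[of i \<omega>] xS[of "Suc i" \<omega>] xS[of i \<omega>] iL by auto
      finally show ?thesis .
    qed
    have tmm: "tm i \<in> borel_measurable P" unfolding tm_def using mP iL by auto
    show "integrable P (tm i)" by (rule int_dom[OF _ tmm tb]) (use iS in simp)
    have "E (\<lambda>\<omega>. Zi \<omega> * Di \<omega>) \<le> E (tm i)"
      by (rule integral_mono[OF iZD \<open>integrable P (tm i)\<close>]) (use pw in auto)
    then show "0 \<le> E (tm i)" using EZD by simp
  qed
  have pw: "(m Lx \<omega>)^2 \<le> 4 * I (\<sigma> Lx) \<omega>^(2*r) - 4 * (\<Sum>i<Lx. tm i \<omega>)" for \<omega>
    using doob_pathwise[of "\<lambda>i. x i \<omega>" Lx] unfolding tm_def m_def x2 by simp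
  have iR: "integrable P (\<lambda>\<omega>. 4 * I (\<sigma> Lx) \<omega>^(2*r) - 4 * (\<Sum>i<Lx. tm i \<omega>))"
    using iI[of Lx] itm by (intro Bochner_Integration.integrable_diff integrable_mult_right
        Bochner_Integration.integrable_sum) auto
  have "E (\<lambda>\<omega>. (m Lx \<omega>)^2) \<le> E (\<lambda>\<omega>. 4 * I (\<sigma> Lx) \<omega>^(2*r) - 4 * (\<Sum>i<Lx. tm i \<omega>))"
    by (rule integral_mono[OF imx iR]) (use pw in auto)
  also have "\<dots> = 4 * E (\<lambda>\<omega>. I (\<sigma> Lx) \<omega>^(2*r)) - 4 * (\<Sum>i<Lx. E (tm i))"
  proof -
    have is1: "integrable P (\<lambda>\<omega>. \<Sum>i<Lx. tm i \<omega>)" using itm by (intro Bochner_Integration.integrable_sum) auto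
    have is2: "integrable P (\<lambda>\<omega>. 4 * I (\<sigma> Lx) \<omega>^(2*r))" using iI[of Lx] by simp
    have "E (\<lambda>\<omega>. 4 * I (\<sigma> Lx) \<omega>^(2*r) - 4 * (\<Sum>i<Lx. tm i \<omega>))
        = E (\<lambda>\<omega>. 4 * I (\<sigma> Lx) \<omega>^(2*r)) - E (\<lambda>\<omega>. 4 * (\<Sum>i<Lx. tm i \<omega>))"
      using is1 is2 by (intro Bochner_Integration.integral_diff) auto
    also have "E (\<lambda>\<omega>. 4 * (\<Sum>i<Lx. tm i \<omega>)) = 4 * (\<Sum>i<Lx. E (tm i))"
      using itm by (simp add: Bochner_Integration.integral_sum)
    finally show ?thesis by simp
  qed
  also have "\<dots> \<le> 4 * E (\<lambda>\<omega>. I (\<sigma> Lx) \<omega>^(2*r))"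
  proof -
    have "0 \<le> (\<Sum>i<Lx. E (tm i))" using Etm by (intro sum_nonneg) auto
    then show ?thesis by simp
  qed
  finally show "E (\<lambda>\<omega>. (Max ((\<lambda>i. \<bar>I (\<sigma> i) \<omega>\<bar>^r) ` {..Lx}))^2) \<le> 4 * E (\<lambda>\<omega>. I (\<sigma> Lx) \<omega>^(2*r))"
    unfolding mx_eq .
qed

end

context abep_inf begin

definition "sgl l i = real i * (dt / 2^l)"
definition "Mx r n l \<omega> = (Max ((\<lambda>i. \<bar>I (sgl l i) \<omega>\<bar>^r) ` {..n*2^l}))^2"
definition "Jq r n \<omega> = enn2real (SUP l. ennreal (Mx r n l \<omega>))"

lemma sgl_nonneg: "0 \<le> sgl l i" unfolding sgl_def using dt_pos by simp

lemma tk_sgl: "tk k = sgl l (k * 2^l)" unfolding sgl_def tk_def by simp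

lemma sgl_top: "sgl l (n * 2^l) = tk n" using tk_sgl by simp

lemma sgl_mono: "i \<le> j \<Longrightarrow> sgl l i \<le> sgl l j" unfolding sgl_def using dt_pos by (intro mult_right_mono) auto

lemma sgl_le: "i \<le> n * 2^l \<Longrightarrow> sgl l i \<le> tk n"
  unfolding tk_sgl[of n l] by (rule sgl_mono)

lemma sgl_step:
  assumes "i < n * 2^l"
  shows "i div 2^l < n" "tk (i div 2^l) \<le> sgl l i" "sgl l (Suc i) \<le> tk (Suc (i div 2^l))"
proof -
  let ?k = "i div 2^l"
  show "?k < n" using assms by (simp add: less_mult_imp_div_less)
  have "?k * 2^l \<le> i" by (rule div_times_less_eq_dividend)
  then show "tk ?k \<le> sgl l i" unfolding tk_sgl[of ?k l] by (rule sgl_mono)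
  have "i = ?k * 2^l + i mod 2^l" by (rule div_mult_mod_eq[symmetric])
  moreover have "i mod 2^l < 2^l" by simp
  moreover have "Suc ?k * 2^l = ?k * 2^l + 2^l" by simp
  ultimately have "Suc i \<le> Suc ?k * 2^l" by linarith
  then show "sgl l (Suc i) \<le> tk (Suc ?k)" unfolding tk_sgl[of "Suc ?k" l] by (rule sgl_mono)
qed

lemma Mx_doob:
  assumes r: "r \<ge> 1" and n: "n \<le> M" and ig: "\<And>k. k < n \<Longrightarrow> integrable P (\<lambda>\<omega>. g (X k \<omega>)^(2*r))"
  shows "integrable P (Mx r n l)" "E (Mx r n l) \<le> 4 * E (\<lambda>\<omega>. I (tk n) \<omega>^(2*r))"
proof -
  have tn: "tk n \<le> T" using tk_le_T n by simp
  have A: "\<And>i. i \<le> n * 2^l \<Longrightarrow> 0 \<le> sgl l i \<and> sgl l i \<le> T"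
    using sgl_nonneg sgl_le tn by (meson order_trans)
  have Bm: "\<And>i j. i \<le> j \<Longrightarrow> j \<le> n * 2^l \<Longrightarrow> sgl l i \<le> sgl l j" by (rule sgl_mono)
  have C: "\<exists>k<M. tk k \<le> sgl l i \<and> sgl l (Suc i) \<le> tk (Suc k) \<and> integrable P (\<lambda>\<omega>. g (X k \<omega>)^(2*r))"
    if "i < n * 2^l" for i
    using sgl_step[OF that] ig n by (intro exI[of _ "i div 2^l"]) auto
  have D: "integrable P (\<lambda>\<omega>. I (sgl l i) \<omega>^(2*r))" if "i \<le> n * 2^l" for i
    by (rule I_moment_any[OF r n ig sgl_nonneg sgl_le[OF that]])
  note d = doob_finite[where \<sigma>="sgl l" and Lx="n * 2^l" and r=r, OF r A Bm C D]
  show "integrable P (Mx r n l)" using d(1) unfolding Mx_def[abs_def] .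
  show "E (Mx r n l) \<le> 4 * E (\<lambda>\<omega>. I (tk n) \<omega>^(2*r))" using d(2) unfolding Mx_def[abs_def] sgl_top .
qed

lemma Mx_mono: "Mx r n l \<omega> \<le> Mx r n (Suc l) \<omega>"
proof -
  let ?A = "(\<lambda>i. \<bar>I (sgl l i) \<omega>\<bar>^r) ` {..n*2^l}"
  let ?B = "(\<lambda>i. \<bar>I (sgl (Suc l) i) \<omega>\<bar>^r) ` {..n*2^Suc l}"
  have "Max ?A \<le> Max ?B"
  proof (rule Max.boundedI)
    show "finite ?A" "?A \<noteq> {}" by auto
    fix y assume "y \<in> ?A"
    then obtain i where i: "i \<le> n*2^l" "y = \<bar>I (sgl l i) \<omega>\<bar>^r" by auto
    have "sgl l i = sgl (Suc l) (2*i)" unfolding sgl_def by simp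
    moreover have "2*i \<le> n*2^Suc l" using i by simp
    ultimately have "y \<in> ?B" using i by (auto intro!: image_eqI[of _ _ "2*i"])
    then show "y \<le> Max ?B" by (intro Max_ge) auto
  qed
  moreover have "0 \<le> Max ?A"
  proof -
    have "\<bar>I (sgl l 0) \<omega>\<bar>^r \<le> Max ?A" by (intro Max_ge) auto
    then show ?thesis by (rule order_trans[rotated]) simp
  qed
  ultimately show ?thesis unfolding Mx_def by (intro power_mono) auto
qed

lemma Mx_nonneg: "0 \<le> Mx r n l \<omega>" unfolding Mx_def by simp

lemma Mx_ge: "i \<le> n*2^l \<Longrightarrow> I (sgl l i) \<omega>^(2*r) \<le> Mx r n l \<omega>"
proof -
  assume i: "i \<le> n*2^l"
  have "\<bar>I (sgl l i) \<omega>\<bar>^r \<le> Max ((\<lambda>i. \<bar>I (sgl l i) \<omega>\<bar>^r) ` {..n*2^l})" using i by (intro Max_ge) auto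
  then have "(\<bar>I (sgl l i) \<omega>\<bar>^r)^2 \<le> Mx r n l \<omega>" unfolding Mx_def by (intro power_mono) auto
  then show ?thesis by (simp add: power_mult[symmetric] power_even_abs mult.commute)
qed

lemma Mx_bound:
  assumes "\<omega> \<in> space P" "n \<le> M"
  shows "\<exists>C. \<forall>l. Mx r n l \<omega> \<le> C"
proof -
  have "compact ((\<lambda>s. I s \<omega>) ` {0..T})" by (intro compact_continuous_image I_cont assms) simp
  then have "bounded ((\<lambda>s. I s \<omega>) ` {0..T})" by (rule compact_imp_bounded)
  then obtain R where R: "\<forall>s\<in>{0..T}. \<bar>I s \<omega>\<bar> \<le> R" unfolding bounded_iff by auto
  have "Mx r n l \<omega> \<le> (R^r)^2" for l
  proof -
    have "Max ((\<lambda>i. \<bar>I (sgl l i) \<omega>\<bar>^r) ` {..n*2^l}) \<le> R^r"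
    proof (rule Max.boundedI)
      show "finite ((\<lambda>i. \<bar>I (sgl l i) \<omega>\<bar>^r) ` {..n*2^l})" "(\<lambda>i. \<bar>I (sgl l i) \<omega>\<bar>^r) ` {..n*2^l} \<noteq> {}" by auto
      fix y assume "y \<in> (\<lambda>i. \<bar>I (sgl l i) \<omega>\<bar>^r) ` {..n*2^l}"
      then obtain i where i: "i \<le> n*2^l" "y = \<bar>I (sgl l i) \<omega>\<bar>^r" by auto
      have "sgl l i \<in> {0..T}" using sgl_nonneg sgl_le[OF i(1)] tk_le_T[OF assms(2)] by auto
      then show "y \<le> R^r" using R i by (auto intro: power_mono)
    qed
    moreover have "0 \<le> Max ((\<lambda>i. \<bar>I (sgl l i) \<omega>\<bar>^r) ` {..n*2^l})"
    proof -
      have "\<bar>I (sgl l 0) \<omega>\<bar>^r \<le> Max ((\<lambda>i. \<bar>I (sgl l i) \<omega>\<bar>^r) ` {..n*2^l})" by (intro Max_ge) auto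
      then show ?thesis by (rule order_trans[rotated]) simp
    qed
    ultimately show ?thesis unfolding Mx_def by (intro power_mono) auto
  qed
  then show ?thesis by blast
qed

lemma Mx_meas:
  assumes r: "r \<ge> 1" and n: "n \<le> M" and ig: "\<And>k. k < n \<Longrightarrow> integrable P (\<lambda>\<omega>. g (X k \<omega>)^(2*r))"
  shows "Mx r n l \<in> borel_measurable P"
  using Mx_doob(1)[OF r n ig] by (rule borel_measurable_integrable)

lemma SUP_fin:
  assumes "\<omega> \<in> space P" "n \<le> M"
  shows "(SUP l. ennreal (Mx r n l \<omega>)) < \<infinity>"
proof -
  obtain C where C: "\<forall>l. Mx r n l \<omega> \<le> C" using Mx_bound[OF assms] by blast
  have "(SUP l. ennreal (Mx r n l \<omega>)) \<le> ennreal C" using C by (intro SUP_least ennreal_leI) auto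
  then show ?thesis using order.strict_trans1 by fastforce
qed

lemma Jq_ge:
  assumes \<omega>: "\<omega> \<in> space P" and n: "n \<le> M" and s: "0 \<le> s" "s \<le> tk n"
  shows "I s \<omega>^(2*r) \<le> Jq r n \<omega>"
proof -
  define y where "y l = s * 2^l / dt" for l :: nat
  define u where "u l = sgl l (nat \<lfloor>y l\<rfloor>)" for l
  have y0: "0 \<le> y l" for l unfolding y_def using s dt_pos by simp
  have uy: "u l = real (nat \<lfloor>y l\<rfloor>) * (dt / 2^l)" for l unfolding u_def sgl_def by simp
  have fl: "real (nat \<lfloor>y l\<rfloor>) \<le> y l" "y l < real (nat \<lfloor>y l\<rfloor>) + 1" for l
    using y0[of l] by linarith+
  have u_le: "u l \<le> s" for l
  proof -
    have "u l \<le> y l * (dt / 2^l)" unfolding uy using fl dt_pos by (intro mult_right_mono) auto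
    also have "\<dots> = s" unfolding y_def using dt_pos by simp
    finally show ?thesis .
  qed
  have u_ge: "s - dt * inverse (2^l) \<le> u l" for l
  proof -
    have "y l - 1 \<le> real (nat \<lfloor>y l\<rfloor>)" using fl(2)[of l] by linarith
    then have "(y l - 1) * (dt / 2^l) \<le> u l" unfolding uy using dt_pos by (intro mult_right_mono) auto
    moreover have "(y l - 1) * (dt / 2^l) = s - dt * inverse (2^l)" unfolding y_def using dt_pos
      by (simp add: field_simps)
    ultimately show ?thesis by simp
  qed
  have idx: "nat \<lfloor>y l\<rfloor> \<le> n * 2^l" for l
  proof -
    have "y l \<le> real n * 2^l" unfolding y_def using s dt_pos unfolding tk_def by (simp add: field_simps)
    then have "real (nat \<lfloor>y l\<rfloor>) \<le> real (n * 2^l)" using fl(1)[of l] by simp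
    then show ?thesis by (simp only: of_nat_le_iff)
  qed
  have u0: "u l \<in> {0..T}" for l using sgl_nonneg sgl_le[OF idx] tk_le_T[OF n] unfolding u_def by (auto intro: order_trans)
  have sT: "s \<in> {0..T}" using s tk_le_T[OF n] by auto
  have lim0: "(\<lambda>l. s - dt * inverse (2^l)) \<longlonglongrightarrow> s - dt * 0"
    by (intro tendsto_diff tendsto_const tendsto_mult LIMSEQ_inverse_realpow_zero) simp
  have ul: "u \<longlonglongrightarrow> s"
    by (rule tendsto_sandwich[where f="\<lambda>l. s - dt * inverse (2^l)" and g=u and h="\<lambda>l. s" and c=s])
       (use u_ge u_le lim0 in auto)
  have Il: "(\<lambda>l. I (u l) \<omega>) \<longlonglongrightarrow> I s \<omega>"
    by (rule continuous_on_tendsto_compose[OF I_cont[OF \<omega>] ul sT]) (use u0 in auto)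
  have El: "(\<lambda>l. ennreal (I (u l) \<omega>^(2*r))) \<longlonglongrightarrow> ennreal (I s \<omega>^(2*r))"
    by (intro tendsto_ennrealI tendsto_power Il)
  have "ennreal (I s \<omega>^(2*r)) \<le> (SUP l. ennreal (Mx r n l \<omega>))"
  proof (rule LIMSEQ_le_const2[OF El], intro exI allI impI)
    fix l
    have "I (u l) \<omega>^(2*r) \<le> Mx r n l \<omega>" unfolding u_def by (rule Mx_ge[OF idx])
    then have "ennreal (I (u l) \<omega>^(2*r)) \<le> ennreal (Mx r n l \<omega>)" by (rule ennreal_leI)
    also have "\<dots> \<le> (SUP l. ennreal (Mx r n l \<omega>))" by (rule SUP_upper) simp
    finally show "ennreal (I (u l) \<omega>^(2*r)) \<le> (SUP l. ennreal (Mx r n l \<omega>))" .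
  qed
  then have "enn2real (ennreal (I s \<omega>^(2*r))) \<le> Jq r n \<omega>"
    unfolding Jq_def using SUP_fin[OF \<omega> n] by (intro enn2real_mono) auto
  then show ?thesis by (simp add: zero_le_even_power)
qed

lemma Jq_nonneg: "0 \<le> Jq r n \<omega>" unfolding Jq_def by simp

lemma Jq_int:
  assumes r: "r \<ge> 1" and n: "n \<le> M" and ig: "\<And>k. k < n \<Longrightarrow> integrable P (\<lambda>\<omega>. g (X k \<omega>)^(2*r))"
  shows "integrable P (Jq r n)" "E (Jq r n) \<le> 4 * E (\<lambda>\<omega>. I (tk n) \<omega>^(2*r))"
proof -
  let ?C = "4 * E (\<lambda>\<omega>. I (tk n) \<omega>^(2*r))"
  have C0: "0 \<le> ?C" by (simp add: integral_nonneg_AE zero_le_even_power)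
  have mM: "(\<lambda>\<omega>. ennreal (Mx r n l \<omega>)) \<in> borel_measurable P" for l
    using Mx_meas[OF r n ig] by (rule measurable_compose[OF _ measurable_ennreal])
  have mS: "(\<lambda>\<omega>. SUP l. ennreal (Mx r n l \<omega>)) \<in> borel_measurable P"
    by (rule borel_measurable_SUP) (use mM in auto)
  have mJ: "Jq r n \<in> borel_measurable P" unfolding Jq_def[abs_def]
    by (rule borel_measurable_enn2real[OF mS])
  have "(\<integral>\<^sup>+\<omega>. ennreal (Jq r n \<omega>) \<partial>P) = (\<integral>\<^sup>+\<omega>. (SUP l. ennreal (Mx r n l \<omega>)) \<partial>P)"
  proof (intro nn_integral_cong)
    fix \<omega> assume "\<omega> \<in> space P"
    then have "(SUP l. ennreal (Mx r n l \<omega>)) < \<infinity>" by (rule SUP_fin[OF _ n])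
    then show "ennreal (Jq r n \<omega>) = (SUP l. ennreal (Mx r n l \<omega>))" unfolding Jq_def by simp
  qed
  also have "\<dots> = (SUP l. (\<integral>\<^sup>+\<omega>. ennreal (Mx r n l \<omega>) \<partial>P))"
  proof (rule nn_integral_monotone_convergence_SUP[OF _ mM])
    show "incseq (\<lambda>l \<omega>. ennreal (Mx r n l \<omega>))"
      by (intro incseq_SucI le_funI ennreal_leI Mx_mono)
  qed
  also have "\<dots> \<le> ennreal ?C"
  proof (rule SUP_least)
    fix l
    have "(\<integral>\<^sup>+\<omega>. ennreal (Mx r n l \<omega>) \<partial>P) = ennreal (E (Mx r n l))"
    proof -
      have iM: "integrable P (Mx r n l)" using Mx_doob(1)[OF r n ig] by blast
      show ?thesis by (rule nn_integral_eq_integral[OF iM]) (intro AE_I2 Mx_nonneg)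
    qed
    also have "\<dots> \<le> ennreal ?C" by (rule ennreal_leI[OF Mx_doob(2)[OF r n ig]])
    finally show "(\<integral>\<^sup>+\<omega>. ennreal (Mx r n l \<omega>) \<partial>P) \<le> ennreal ?C" .
  qed
  finally have nnb: "(\<integral>\<^sup>+\<omega>. ennreal (Jq r n \<omega>) \<partial>P) \<le> ennreal ?C" .
  show iJ: "integrable P (Jq r n)"
    unfolding integrable_iff_bounded using mJ nnb
    by (auto simp: Jq_nonneg order.strict_trans1)
  have "ennreal (E (Jq r n)) \<le> ennreal ?C"
    using nnb nn_integral_eq_integral[OF iJ] by (simp add: Jq_nonneg)
  then show "E (Jq r n) \<le> ?C" using C0 by (simp add: ennreal_le_iff)
qed

end

definition "K0c a x0 = \<bar>a\<bar> + 1 + \<bar>x0\<bar>"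
definition "KK r T = 2^(2*r) * (1 + fact (2*r) * T^(r-1))"
definition "A0c r T a x0 Af Ag = 3^(2*r) * ((K0c a x0)^(2*r) + 2^(2*r) * (T^(2*r-1) * 2^(2*r) * (T * Af^(2*r)))
   + 2^(2*r) * (4 * exp (KK r T * T) * KK r T * 2^(2*r) * (T * Ag^(2*r))))"
definition "B0c r T Lf Lg = 3^(2*r) * (2^(2*r) * (T^(2*r-1) * 2^(2*r) * Lf^(2*r))
   + 2^(2*r) * (4 * exp (KK r T * T) * KK r T * 2^(2*r) * Lg^(2*r)))"

definition "Cglob r T a x0 Af Lf Ag Lg = 1 + A0c r T a x0 Af Ag + B0c r T Lf Lg * T * (A0c r T a x0 Af Ag * exp (B0c r T Lf Lg * T))"

context abep_inf begin

definition "Aq r n \<omega> = (dt * (\<Sum>j<n. \<bar>f (X j \<omega>)\<bar>))^(2*r)"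
definition "RHS r n \<omega> = 3^(2*r) * ((K0c a x0)^(2*r) + 2^(2*r) * Aq r n \<omega> + 2^(2*r) * Jq r n \<omega>)"

lemma Kc_eq: "Kc r = KK r T" unfolding Kc_def KK_def ..

lemma pathwise_q:
  assumes \<omega>: "\<omega> \<in> space P" and n: "n \<le> M" and t: "0 \<le> t" "t \<le> tk n" and r: "r \<ge> 1"
  shows "\<xi> t \<omega>^(2*r) \<le> RHS r n \<omega>"
proof -
  let ?q = "2*r"
  define \<rho> where "\<rho> = root ?q (Jq r n \<omega>)"
  have q0: "0 < ?q" using r by simp
  have \<rho>0: "0 \<le> \<rho>" unfolding \<rho>_def using Jq_nonneg by (simp add: real_root_ge_zero)
  have \<rho>q: "\<rho>^?q = Jq r n \<omega>" unfolding \<rho>_def using q0 Jq_nonneg by simp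
  have hI: "\<forall>s\<in>{0..tk n}. \<bar>I s \<omega>\<bar> \<le> \<rho>"
  proof
    fix s assume "s \<in> {0..tk n}"
    then have "I s \<omega>^?q \<le> Jq r n \<omega>" using Jq_ge[OF \<omega> n] by auto
    then have "\<bar>I s \<omega>\<bar>^Suc (?q - 1) \<le> \<rho>^Suc (?q - 1)" using q0 \<rho>q by (simp add: even_pow_abs)
    then show "\<bar>I s \<omega>\<bar> \<le> \<rho>" using \<rho>0 by (rule power_le_imp_le_base)
  qed
  define A where "A = dt * (\<Sum>j<n. \<bar>f (X j \<omega>)\<bar>)"
  have A0: "0 \<le> A" unfolding A_def using dt_pos by (simp add: sum_nonneg)
  have "\<bar>\<xi> t \<omega>\<bar> \<le> \<bar>a\<bar> + 1 + \<bar>x0\<bar> + 2 * (A + \<rho>)"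
    unfolding A_def by (rule path_bound[OF \<omega> n t hI])
  then have "\<bar>\<xi> t \<omega>\<bar> \<le> K0c a x0 + 2 * A + 2 * \<rho>" unfolding K0c_def by simp
  then have "\<bar>\<xi> t \<omega>\<bar>^?q \<le> (K0c a x0 + 2 * A + 2 * \<rho>)^?q" by (intro power_mono) auto
  also have "\<dots> \<le> 3^?q * ((K0c a x0)^?q + (2 * A)^?q + (2 * \<rho>)^?q)"
    using A0 \<rho>0 by (intro sum3_pow) (auto simp: K0c_def)
  also have "\<dots> = RHS r n \<omega>" unfolding RHS_def Aq_def A_def by (simp add: power_mult_distrib \<rho>q)
  finally show ?thesis by (simp add: even_pow_abs)
qed

lemma fg_pow:
  assumes \<omega>: "\<omega> \<in> space P" and k: "k \<le> M"
  shows "f (X k \<omega>)^(2*r) \<le> 2^(2*r) * (Af^(2*r) + Lf^(2*r) * X k \<omega>^(2*r))"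
    "g (X k \<omega>)^(2*r) \<le> 2^(2*r) * (Ag^(2*r) + Lg^(2*r) * X k \<omega>^(2*r))"
proof -
  have ge: "a + 1 / real N \<le> X k \<omega>" using X_ge[OF \<omega> k] unfolding cc_def .
  have "\<bar>f (X k \<omega>)\<bar>^(2*r) \<le> (Af + Lf * \<bar>X k \<omega>\<bar>)^(2*r)" using fgrow[OF ge] by (intro power_mono) auto
  also have "\<dots> \<le> 2^(2*r) * (Af^(2*r) + (Lf * \<bar>X k \<omega>\<bar>)^(2*r))" using Af Lf by (intro sum2_pow) auto
  finally show "f (X k \<omega>)^(2*r) \<le> 2^(2*r) * (Af^(2*r) + Lf^(2*r) * X k \<omega>^(2*r))"
    by (simp add: even_pow_abs power_mult_distrib)
  have "\<bar>g (X k \<omega>)\<bar>^(2*r) \<le> (Ag + Lg * \<bar>X k \<omega>\<bar>)^(2*r)" using ggrow[OF ge] by (intro power_mono) auto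
  also have "\<dots> \<le> 2^(2*r) * (Ag^(2*r) + (Lg * \<bar>X k \<omega>\<bar>)^(2*r))" using Ag Lg by (intro sum2_pow) auto
  finally show "g (X k \<omega>)^(2*r) \<le> 2^(2*r) * (Ag^(2*r) + Lg^(2*r) * X k \<omega>^(2*r))"
    by (simp add: even_pow_abs power_mult_distrib)
qed

lemma X_meas_P: "k \<le> M \<Longrightarrow> X k \<in> borel_measurable P"
  using X_meas[of k "tk k"] meas_P[OF tk_nonneg] by blast

lemma g_int:
  assumes k: "k \<le> M" and iX: "integrable P (\<lambda>\<omega>. X k \<omega>^(2*r))"
  shows "integrable P (\<lambda>\<omega>. g (X k \<omega>)^(2*r))"
    "E (\<lambda>\<omega>. g (X k \<omega>)^(2*r)) \<le> 2^(2*r) * (Ag^(2*r) + Lg^(2*r) * E (\<lambda>\<omega>. X k \<omega>^(2*r)))"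
proof -
  have ib: "integrable P (\<lambda>\<omega>. 2^(2*r) * (Ag^(2*r) + Lg^(2*r) * X k \<omega>^(2*r)))" using iX by simp
  have m: "(\<lambda>\<omega>. g (X k \<omega>)^(2*r)) \<in> borel_measurable P"
    using meas_P[OF tk_nonneg gX_meas[OF k order_refl]] by (rule borel_measurable_power)
  show ig: "integrable P (\<lambda>\<omega>. g (X k \<omega>)^(2*r))"
  proof (rule int_dom[OF ib m])
    fix \<omega> assume "\<omega> \<in> space P"
    have "0 \<le> g (X k \<omega>)^(2*r)" by (simp add: zero_le_even_power)
    then have "\<bar>g (X k \<omega>)^(2*r)\<bar> = g (X k \<omega>)^(2*r)" by (rule abs_of_nonneg)
    then show "\<bar>g (X k \<omega>)^(2*r)\<bar> \<le> 2^(2*r) * (Ag^(2*r) + Lg^(2*r) * X k \<omega>^(2*r))"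
      using fg_pow(2)[OF \<open>\<omega> \<in> space P\<close> k, where r=r] by linarith
  qed
  have "E (\<lambda>\<omega>. g (X k \<omega>)^(2*r)) \<le> E (\<lambda>\<omega>. 2^(2*r) * (Ag^(2*r) + Lg^(2*r) * X k \<omega>^(2*r)))"
    by (rule integral_mono[OF ig ib]) (use fg_pow(2)[OF _ k, where r=r] in auto)
  also have "\<dots> = 2^(2*r) * (Ag^(2*r) + Lg^(2*r) * E (\<lambda>\<omega>. X k \<omega>^(2*r)))"
    using iX prob_space.prob_space[OF ps] by simp
  finally show "E (\<lambda>\<omega>. g (X k \<omega>)^(2*r)) \<le> 2^(2*r) * (Ag^(2*r) + Lg^(2*r) * E (\<lambda>\<omega>. X k \<omega>^(2*r)))" .
qed

lemma f_int:
  assumes k: "k \<le> M" and iX: "integrable P (\<lambda>\<omega>. X k \<omega>^(2*r))"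
  shows "integrable P (\<lambda>\<omega>. f (X k \<omega>)^(2*r))"
proof -
  have ib: "integrable P (\<lambda>\<omega>. 2^(2*r) * (Af^(2*r) + Lf^(2*r) * X k \<omega>^(2*r)))" using iX by simp
  have m: "(\<lambda>\<omega>. f (X k \<omega>)^(2*r)) \<in> borel_measurable P"
    using meas_P[OF tk_nonneg fX_meas[OF k order_refl]] by (rule borel_measurable_power)
  show ig: "integrable P (\<lambda>\<omega>. f (X k \<omega>)^(2*r))"
  proof (rule int_dom[OF ib m])
    fix \<omega> assume "\<omega> \<in> space P"
    have "0 \<le> f (X k \<omega>)^(2*r)" by (simp add: zero_le_even_power)
    then have "\<bar>f (X k \<omega>)^(2*r)\<bar> = f (X k \<omega>)^(2*r)" by (rule abs_of_nonneg)
    then show "\<bar>f (X k \<omega>)^(2*r)\<bar> \<le> 2^(2*r) * (Af^(2*r) + Lf^(2*r) * X k \<omega>^(2*r))"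
      using fg_pow(1)[OF \<open>\<omega> \<in> space P\<close> k, where r=r] by linarith
  qed
qed

lemma A_pow:
  assumes n: "n \<le> M" and r: "r \<ge> 1"
  shows "Aq r n \<omega> \<le> T^(2*r-1) * dt * (\<Sum>j<n. f (X j \<omega>)^(2*r))"
proof -
  have "Aq r n \<omega> = (\<Sum>j<n. dt * \<bar>f (X j \<omega>)\<bar>)^(2*r)" unfolding Aq_def by (simp add: sum_distrib_left)
  also have "\<dots> \<le> real n^(2*r-1) * (\<Sum>j<n. (dt * \<bar>f (X j \<omega>)\<bar>)^(2*r))"
    by (rule power_mean_sum) (use r in auto)
  also have "\<dots> = (real n * dt)^(2*r-1) * dt * (\<Sum>j<n. f (X j \<omega>)^(2*r))"
  proof -
    have "(\<Sum>j<n. (dt * \<bar>f (X j \<omega>)\<bar>)^(2*r)) = dt^(2*r) * (\<Sum>j<n. f (X j \<omega>)^(2*r))"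
      by (simp add: power_mult_distrib even_pow_abs sum_distrib_left)
    moreover have "dt^(2*r) = dt^(2*r-1) * dt" using r by (simp add: power_Suc2[symmetric])
    ultimately show ?thesis by (simp add: power_mult_distrib)
  qed
  also have "\<dots> \<le> T^(2*r-1) * dt * (\<Sum>j<n. f (X j \<omega>)^(2*r))"
    using n_dt_le_T[OF n] dt_pos
    by (intro mult_right_mono power_mono) (auto simp: sum_nonneg zero_le_even_power)
  finally show ?thesis .
qed

lemma exp_pow_bound:
  assumes "0 \<le> c" "n \<le> M"
  shows "(1 + c * dt)^n \<le> exp (c * T)"
proof -
  have "(1 + c * dt)^n \<le> (exp (c * dt))^n" using assms dt_pos by (intro power_mono) auto
  also have "\<dots> = exp (c * (real n * dt))" by (simp add: exp_of_nat_mult[symmetric] mult_ac)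
  also have "\<dots> \<le> exp (c * T)" using assms n_dt_le_T[OF assms(2)] by (intro exp_le_cancel_iff[THEN iffD2] mult_left_mono) auto
  finally show ?thesis .
qed

lemma RHS_bound:
  assumes n: "n \<le> M" and r: "r \<ge> 1" and iX: "\<And>k. k < n \<Longrightarrow> integrable P (\<lambda>\<omega>. X k \<omega>^(2*r))"
  shows "integrable P (RHS r n)"
    "E (RHS r n) \<le> A0c r T a x0 Af Ag + B0c r T Lf Lg * dt * (\<Sum>k<n. E (\<lambda>\<omega>. X k \<omega>^(2*r)))"
proof -
  let ?q = "2*r"
  define e where "e k = E (\<lambda>\<omega>. X k \<omega>^?q)" for k
  define S where "S = (\<Sum>k<n. e k)"
  have e0: "0 \<le> e k" for k unfolding e_def by (intro integral_nonneg_AE AE_I2) (simp add: zero_le_even_power)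
  have S0: "0 \<le> S" unfolding S_def using e0 by (simp add: sum_nonneg)
  have kM: "k < n \<Longrightarrow> k \<le> M" for k using n by simp
  have ig: "integrable P (\<lambda>\<omega>. g (X k \<omega>)^?q)" if "k < n" for k using g_int(1)[OF kM[OF that] iX[OF that]] .
  define Fb where "Fb \<omega> = T^(?q-1) * dt * (\<Sum>j<n. 2^?q * (Af^?q + Lf^?q * X j \<omega>^?q))" for \<omega>
  have iFb: "integrable P Fb" unfolding Fb_def using iX
    by (intro integrable_mult_right Bochner_Integration.integrable_sum Bochner_Integration.integrable_add) auto
  have Am: "Aq r n \<in> borel_measurable P"
  proof -
    have "(\<lambda>\<omega>. f (X j \<omega>)) \<in> borel_measurable P" if "j < n" for j
      using meas_P[OF tk_nonneg fX_meas[OF kM[OF that] order_refl]] .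
    then show ?thesis unfolding Aq_def[abs_def]
      by (intro borel_measurable_power borel_measurable_times borel_measurable_const
          borel_measurable_sum borel_measurable_abs) auto
  qed
  have AF: "Aq r n \<omega> \<le> Fb \<omega>" if "\<omega> \<in> space P" for \<omega>
  proof -
    have "Aq r n \<omega> \<le> T^(?q-1) * dt * (\<Sum>j<n. f (X j \<omega>)^?q)" by (rule A_pow[OF n r])
    also have "\<dots> \<le> Fb \<omega>" unfolding Fb_def using Tpos dt_pos
      by (intro mult_left_mono sum_mono fg_pow(1)[OF that]) (auto intro: kM)
    finally show ?thesis .
  qed
  have A0: "0 \<le> Aq r n \<omega>" for \<omega> unfolding Aq_def using dt_pos by (simp add: zero_le_even_power)
  have iA: "integrable P (Aq r n)" by (rule int_dom[OF iFb Am]) (use AF A0 in auto)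
  have EA: "E (Aq r n) \<le> T^(?q-1) * 2^?q * (T * Af^?q + Lf^?q * dt * S)"
  proof -
    have "E (Aq r n) \<le> E Fb" by (rule integral_mono[OF iA iFb AF])
    also have "E Fb = T^(?q-1) * dt * (\<Sum>j<n. 2^?q * (Af^?q + Lf^?q * e j))"
      unfolding Fb_def e_def using iX prob_space.prob_space[OF ps]
      by (simp add: Bochner_Integration.integral_sum)
    also have "\<dots> = T^(?q-1) * 2^?q * (real n * dt * Af^?q + Lf^?q * dt * S)"
      unfolding S_def by (simp add: sum.distrib sum_distrib_left sum_distrib_right algebra_simps)
    also have "\<dots> \<le> T^(?q-1) * 2^?q * (T * Af^?q + Lf^?q * dt * S)"
      using n_dt_le_T[OF n] Af Tpos by (intro mult_left_mono add_right_mono mult_right_mono) auto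
    finally show ?thesis .
  qed
  note J = Jq_int[OF r n ig]
  have EJ: "E (Jq r n) \<le> 4 * exp (KK r T * T) * KK r T * 2^?q * (T * Ag^?q + Lg^?q * dt * S)"
  proof -
    have K0: "0 \<le> KK r T" using Kc_nonneg Kc_eq by simp
    have "E (Jq r n) \<le> 4 * E (\<lambda>\<omega>. I (tk n) \<omega>^?q)" using J(2) .
    also have "E (\<lambda>\<omega>. I (tk n) \<omega>^?q) \<le> (1 + Kc r * dt)^n * (Kc r * dt) * (\<Sum>k<n. E (\<lambda>\<omega>. g (X k \<omega>)^?q))"
      using I_moment_grid[OF r n ig] by blast
    also have "\<dots> \<le> exp (KK r T * T) * (KK r T * dt) * (\<Sum>k<n. 2^?q * (Ag^?q + Lg^?q * e k))"
    proof (intro mult_mono)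
      show "(1 + Kc r * dt)^n \<le> exp (KK r T * T)" unfolding Kc_eq by (rule exp_pow_bound[OF K0 n])
      show "(\<Sum>k<n. E (\<lambda>\<omega>. g (X k \<omega>)^?q)) \<le> (\<Sum>k<n. 2^?q * (Ag^?q + Lg^?q * e k))"
        unfolding e_def by (intro sum_mono g_int(2)[OF kM iX]) auto
      show "0 \<le> exp (KK r T * T) * (KK r T * dt)" using K0 dt_pos by simp
      show "0 \<le> (\<Sum>k<n. E (\<lambda>\<omega>. g (X k \<omega>)^?q))"
        by (intro sum_nonneg integral_nonneg_AE AE_I2) (simp add: zero_le_even_power)
    qed (use K0 dt_pos in \<open>auto simp: Kc_eq\<close>)
    also have "\<dots> = exp (KK r T * T) * KK r T * 2^?q * (real n * dt * Ag^?q + Lg^?q * dt * S)"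
      unfolding S_def by (simp add: sum.distrib sum_distrib_left sum_distrib_right algebra_simps)
    also have "\<dots> \<le> exp (KK r T * T) * KK r T * 2^?q * (T * Ag^?q + Lg^?q * dt * S)"
      using n_dt_le_T[OF n] Ag K0 by (intro mult_left_mono add_right_mono mult_right_mono) auto
    finally show ?thesis using K0 by simp
  qed
  show iR: "integrable P (RHS r n)" unfolding RHS_def[abs_def] using iA J(1) by simp
  have "E (RHS r n) = 3^?q * ((K0c a x0)^?q + 2^?q * E (Aq r n) + 2^?q * E (Jq r n))"
    unfolding RHS_def[abs_def] using iA J(1) prob_space.prob_space[OF ps] by simp
  also have "\<dots> \<le> 3^?q * ((K0c a x0)^?q + 2^?q * (T^(?q-1) * 2^?q * (T * Af^?q + Lf^?q * dt * S))
      + 2^?q * (4 * exp (KK r T * T) * KK r T * 2^?q * (T * Ag^?q + Lg^?q * dt * S)))"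
    using EA EJ by (intro mult_left_mono add_mono order_refl) auto
  also have "\<dots> = A0c r T a x0 Af Ag + B0c r T Lf Lg * dt * S"
    unfolding A0c_def B0c_def by (simp add: algebra_simps)
  finally show "E (RHS r n) \<le> A0c r T a x0 Af Ag + B0c r T Lf Lg * dt * (\<Sum>k<n. E (\<lambda>\<omega>. X k \<omega>^(2*r)))"
    unfolding S_def e_def .
qed

lemma A0c_nonneg: "0 \<le> A0c r T a x0 Af Ag"
  using Tpos Af Ag Kc_nonneg[of r] unfolding A0c_def K0c_def Kc_eq by (simp add: zero_le_even_power)

lemma B0c_nonneg: "0 \<le> B0c r T Lf Lg"
  using Tpos Lf Lg Kc_nonneg[of r] unfolding B0c_def Kc_eq by (simp add: zero_le_even_power)

lemma X_int:
  assumes r: "r \<ge> 1"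
  shows "n \<le> M \<Longrightarrow> integrable P (\<lambda>\<omega>. X n \<omega>^(2*r))"
proof (induction n rule: less_induct)
  case (less n)
  have iX: "\<And>k. k < n \<Longrightarrow> integrable P (\<lambda>\<omega>. X k \<omega>^(2*r))" using less by auto
  have iR: "integrable P (RHS r n)" by (rule RHS_bound(1)[OF less.prems r iX])
  have m: "(\<lambda>\<omega>. X n \<omega>^(2*r)) \<in> borel_measurable P" using X_meas_P[OF less.prems] by (rule borel_measurable_power)
  show ?case
  proof (rule int_dom[OF iR m])
    fix \<omega> assume \<omega>: "\<omega> \<in> space P"
    have "X n \<omega>^(2*r) \<le> RHS r n \<omega>" unfolding X_def by (rule pathwise_q[OF \<omega> less.prems tk_nonneg order_refl r])
    moreover have "0 \<le> X n \<omega>^(2*r)" by (simp add: zero_le_even_power)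
    ultimately show "\<bar>X n \<omega>^(2*r)\<bar> \<le> RHS r n \<omega>" by simp
  qed
qed

lemma X_E:
  assumes r: "r \<ge> 1" and n: "n \<le> M"
  shows "E (\<lambda>\<omega>. X n \<omega>^(2*r)) \<le> A0c r T a x0 Af Ag + B0c r T Lf Lg * dt * (\<Sum>k<n. E (\<lambda>\<omega>. X k \<omega>^(2*r)))"
proof -
  have iX: "\<And>k. k < n \<Longrightarrow> integrable P (\<lambda>\<omega>. X k \<omega>^(2*r))" using X_int[OF r] n by auto
  have "E (\<lambda>\<omega>. X n \<omega>^(2*r)) \<le> E (RHS r n)"
  proof (rule integral_mono[OF X_int[OF r n] RHS_bound(1)[OF n r iX]])
    fix \<omega> assume \<omega>: "\<omega> \<in> space P"
    show "X n \<omega>^(2*r) \<le> RHS r n \<omega>" unfolding X_def by (rule pathwise_q[OF \<omega> n tk_nonneg order_refl r])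
  qed
  also have "\<dots> \<le> A0c r T a x0 Af Ag + B0c r T Lf Lg * dt * (\<Sum>k<n. E (\<lambda>\<omega>. X k \<omega>^(2*r)))"
    by (rule RHS_bound(2)[OF n r iX])
  finally show ?thesis .
qed

lemma X_E_bound:
  assumes r: "r \<ge> 1" and n: "n \<le> M"
  shows "E (\<lambda>\<omega>. X n \<omega>^(2*r)) \<le> A0c r T a x0 Af Ag * exp (B0c r T Lf Lg * T)"
proof -
  have "E (\<lambda>\<omega>. X n \<omega>^(2*r)) \<le> A0c r T a x0 Af Ag * (1 + B0c r T Lf Lg * dt)^n"
    by (rule gronwall_discrete[where u="\<lambda>n. E (\<lambda>\<omega>. X n \<omega>^(2*r))", OF A0c_nonneg _ _ n])
       (use B0c_nonneg dt_pos X_E[OF r] in auto)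
  also have "\<dots> \<le> A0c r T a x0 Af Ag * exp (B0c r T Lf Lg * T)"
    by (intro mult_left_mono exp_pow_bound B0c_nonneg A0c_nonneg n)
  finally show ?thesis .
qed

lemma powr_le_pow:
  fixes x p :: real
  assumes "0 \<le> p" "p \<le> real (2*r)"
  shows "\<bar>x\<bar> powr p \<le> 1 + x^(2*r)"
proof (cases "\<bar>x\<bar> \<le> 1")
  case True
  then have "\<bar>x\<bar> powr p \<le> 1" using assms by (intro powr_le1) auto
  moreover have "0 \<le> x^(2*r)" by (simp add: zero_le_even_power)
  ultimately show ?thesis by linarith
next
  case False
  then have "\<bar>x\<bar> powr p \<le> \<bar>x\<bar> powr real (2*r)" using assms by (intro powr_mono) auto
  also have "\<dots> = \<bar>x\<bar>^(2*r)" using False by (intro powr_realpow) auto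
  finally show ?thesis by (simp add: even_pow_abs)
qed


lemma final_bound:
  assumes r: "r \<ge> 1" and p: "0 \<le> p" "p \<le> real (2*r)"
  shows "(\<integral>\<^sup>+\<omega>. (SUP t\<in>{0..T}. ennreal (\<bar>\<xi> t \<omega>\<bar> powr p)) \<partial>P) \<le> ennreal (Cglob r T a x0 Af Lf Ag Lg)"
proof -
  have iX: "\<And>k. k < M \<Longrightarrow> integrable P (\<lambda>\<omega>. X k \<omega>^(2*r))" using X_int[OF r] by auto
  note iR = RHS_bound(1)[OF order_refl r iX]
  have R0: "0 \<le> RHS r M \<omega>" for \<omega>
    unfolding RHS_def Aq_def K0c_def using Jq_nonneg[of r M \<omega>] by (simp add: zero_le_even_power)
  have "(\<integral>\<^sup>+\<omega>. (SUP t\<in>{0..T}. ennreal (\<bar>\<xi> t \<omega>\<bar> powr p)) \<partial>P) \<le> (\<integral>\<^sup>+\<omega>. ennreal (1 + RHS r M \<omega>) \<partial>P)"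
  proof (intro nn_integral_mono SUP_least ennreal_leI)
    fix \<omega> t assume \<omega>: "\<omega> \<in> space P" and t: "t \<in> {0..T}"
    have "\<bar>\<xi> t \<omega>\<bar> powr p \<le> 1 + \<xi> t \<omega>^(2*r)" by (rule powr_le_pow[OF p])
    also have "\<xi> t \<omega>^(2*r) \<le> RHS r M \<omega>" using t tk_M by (intro pathwise_q[OF \<omega> order_refl _ _ r]) auto
    finally show "\<bar>\<xi> t \<omega>\<bar> powr p \<le> 1 + RHS r M \<omega>" by simp
  qed
  also have "\<dots> = ennreal (E (\<lambda>\<omega>. 1 + RHS r M \<omega>))"
    using iR R0 by (intro nn_integral_eq_integral) (auto intro!: AE_I2 add_nonneg_nonneg)
  also have "E (\<lambda>\<omega>. 1 + RHS r M \<omega>) = 1 + E (RHS r M)" using iR prob_space.prob_space[OF ps] by simp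
  also have "E (RHS r M) \<le> A0c r T a x0 Af Ag + B0c r T Lf Lg * dt * (\<Sum>k<M. E (\<lambda>\<omega>. X k \<omega>^(2*r)))"
    by (rule RHS_bound(2)[OF order_refl r iX])
  also have "\<dots> \<le> A0c r T a x0 Af Ag + B0c r T Lf Lg * dt * (\<Sum>k<M. A0c r T a x0 Af Ag * exp (B0c r T Lf Lg * T))"
    using B0c_nonneg dt_pos X_E_bound[OF r] by (intro add_left_mono mult_left_mono sum_mono) auto
  also have "\<dots> = A0c r T a x0 Af Ag + B0c r T Lf Lg * T * (A0c r T a x0 Af Ag * exp (B0c r T Lf Lg * T))"
    using M1 unfolding dt_def by simp
  finally show ?thesis unfolding Cglob_def by (simp add: ennreal_leI add.assoc)
qed

end

lemma part1:
  fixes f g :: "real \<Rightarrow> real" and a x0 T p Lf Lg :: real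
  assumes "T > 0"
    and "Lf-lipschitz_on (Dom a \<infinity>) f"
    and "Lg-lipschitz_on (Dom a \<infinity>) g"
    and "x0 \<in> DN 1 a \<infinity>"
    and "p \<ge> 2"
  shows "\<exists>C::real. \<forall>(P::'w measure) F B (M::nat) (N::nat) \<xi> U L.
          brownian_motion P F B \<and> M \<ge> 1 \<and> N \<ge> 1 \<and> ABEP P F B f g T M N a \<infinity> x0 \<xi> U L \<longrightarrow>
          (\<integral>\<^sup>+\<omega>. (SUP t\<in>{0..T}. ennreal (\<bar>\<xi> t \<omega>\<bar> powr p)) \<partial>P) \<le> ennreal C"
proof -
  define r where "r = nat \<lceil>p / 2\<rceil>"
  have r1: "r \<ge> 1" unfolding r_def using assms(5) by linarith
  have pr: "0 \<le> p" "p \<le> real (2*r)" unfolding r_def using assms(5) by linarith+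
  define Af where "Af = \<bar>f x0\<bar> + Lf * \<bar>x0\<bar>"
  define Ag where "Ag = \<bar>g x0\<bar> + Lg * \<bar>x0\<bar>"
  have Lf0: "0 \<le> Lf" using assms(2) by (rule lipschitz_on_nonneg)
  have Lg0: "0 \<le> Lg" using assms(3) by (rule lipschitz_on_nonneg)
  have x0D: "x0 \<in> Dom a \<infinity>" "a + 1 < x0" using assms(4) unfolding DN_def Dom_def by auto
  have grow: "\<bar>h x\<bar> \<le> (\<bar>h x0\<bar> + L * \<bar>x0\<bar>) + L * \<bar>x\<bar>"
    if "L-lipschitz_on (Dom a \<infinity>) h" "a < x" for h :: "real \<Rightarrow> real" and L x
  proof -
    have "x \<in> Dom a \<infinity>" using that unfolding Dom_def by auto
    then have "dist (h x) (h x0) \<le> L * dist x x0" using lipschitz_onD[OF that(1) _ x0D(1)] by blast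
    moreover have "L * dist x x0 \<le> L * (\<bar>x\<bar> + \<bar>x0\<bar>)"
      using lipschitz_on_nonneg[OF that(1)] by (intro mult_left_mono) (auto simp: dist_real_def)
    ultimately show ?thesis unfolding dist_real_def by (simp add: algebra_simps)
  qed
  show ?thesis
  proof (intro exI allI impI)
    fix P :: "'w measure" and F B M N \<xi> U L
    assume H: "brownian_motion P F B \<and> M \<ge> 1 \<and> N \<ge> 1 \<and> ABEP P F B f g T M N a \<infinity> x0 \<xi> U L"
    have N1: "N \<ge> 1" using H by simp
    have pos: "0 < 1 / real N" using N1 by simp
    have sub: "{a + 1 / real N..} \<subseteq> Dom a \<infinity>"
    proof
      fix x assume "x \<in> {a + 1 / real N..}"
      then have "a + 1 / real N \<le> x" by simp
      then have "a < x" using pos by linarith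
      then show "x \<in> Dom a \<infinity>" unfolding Dom_def by simp
    qed
    have loc: "abep_inf P F B f g T M N a x0 \<xi> U L Af Lf Ag Lg"
    proof (unfold_locales)
      show "brownian_motion P F B" "ABEP P F B f g T M N a \<infinity> x0 \<xi> U L" "T > 0" "M \<ge> 1" "N \<ge> 1"
        using H assms(1) by auto
      show "continuous_on {a + 1 / real N..} f"
        using lipschitz_on_continuous_on[OF assms(2)] sub by (rule continuous_on_subset)
      show "continuous_on {a + 1 / real N..} g"
        using lipschitz_on_continuous_on[OF assms(3)] sub by (rule continuous_on_subset)
      show "Af \<ge> 0" "Lf \<ge> 0" "Ag \<ge> 0" "Lg \<ge> 0" unfolding Af_def Ag_def using Lf0 Lg0 by auto
      fix x assume "x \<ge> a + 1 / real N"
      then have "a < x" using pos by linarith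
      then show "\<bar>f x\<bar> \<le> Af + Lf * \<bar>x\<bar>" "\<bar>g x\<bar> \<le> Ag + Lg * \<bar>x\<bar>"
        unfolding Af_def Ag_def using grow assms(2,3) by blast+
    qed
    show "(\<integral>\<^sup>+\<omega>. (SUP t\<in>{0..T}. ennreal (\<bar>\<xi> t \<omega>\<bar> powr p)) \<partial>P) \<le> ennreal (Cglob r T a x0 Af Lf Ag Lg)"
      by (rule abep_inf.final_bound[OF loc r1 pr])
  qed
qed

theorem theorem6p1:
  fixes f g :: "real \<Rightarrow> real" and a x0 T p Lf Lg :: real and b :: ereal
  assumes "T > 0"
    and "ereal a < b"
    and "b \<noteq> \<infinity> \<longrightarrow> real_of_ereal b - a > 2"
    and "Lf-lipschitz_on (Dom a b) f"
    and "Lg-lipschitz_on (Dom a b) g"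
    and "x0 \<in> DN 1 a b"
    and "p \<ge> 2"
  shows
    "(b = \<infinity> \<longrightarrow>
       (\<exists>C::real. \<forall>(P::'w measure) F B (M::nat) (N::nat) \<xi> U L.
          brownian_motion P F B \<and> M \<ge> 1 \<and> N \<ge> 1 \<and> ABEP P F B f g T M N a b x0 \<xi> U L \<longrightarrow>
          (\<integral>\<^sup>+\<omega>. (SUP t\<in>{0..T}. ennreal (\<bar>\<xi> t \<omega>\<bar> powr p)) \<partial>P) \<le> ennreal C)) \<and>
     (b \<noteq> \<infinity> \<longrightarrow>
       (\<forall>(P::'w measure) F B (M::nat) (N::nat) \<xi> U L.
          brownian_motion P F B \<and> M \<ge> 1 \<and> N \<ge> 1 \<and> ABEP P F B f g T M N a b x0 \<xi> U L \<longrightarrow>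
          (\<integral>\<^sup>+\<omega>. (SUP t\<in>{0..T}. ennreal (\<bar>\<xi> t \<omega>\<bar> powr p)) \<partial>P)
             \<le> ennreal (max (\<bar>a\<bar> powr p) (\<bar>real_of_ereal b\<bar> powr p)))) \<and>
     (\<forall>(P::'w measure) F B (M::nat) (N::nat) \<xi> U L.
          brownian_motion P F B \<and> M \<ge> 1 \<and> N \<ge> 1 \<and> ABEP P F B f g T M N a b x0 \<xi> U L \<longrightarrow>
          prob_space.prob P {\<omega>\<in>space P. \<forall>t\<in>{0..T}. \<xi> t \<omega> \<in> closure (DN N a b)} = 1)"
proof (intro conjI impI allI)
  assume binf: "b = \<infinity>"
  show "\<exists>C::real. \<forall>(P::'w measure) F B (M::nat) (N::nat) \<xi> U L.
          brownian_motion P F B \<and> M \<ge> 1 \<and> N \<ge> 1 \<and> ABEP P F B f g T M N a b x0 \<xi> U L \<longrightarrow>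
          (\<integral>\<^sup>+\<omega>. (SUP t\<in>{0..T}. ennreal (\<bar>\<xi> t \<omega>\<bar> powr p)) \<partial>P) \<le> ennreal C"
    using part1[OF assms(1) assms(4)[unfolded binf] assms(5)[unfolded binf] assms(6)[unfolded binf] assms(7)]
    unfolding binf .
next
  fix P :: "'w measure" and F B M N \<xi> U L
  assume bfin: "b \<noteq> \<infinity>"
  assume H: "brownian_motion P F B \<and> M \<ge> 1 \<and> N \<ge> 1 \<and> ABEP P F B f g T M N a b x0 \<xi> U L"
  show "(\<integral>\<^sup>+\<omega>. (SUP t\<in>{0..T}. ennreal (\<bar>\<xi> t \<omega>\<bar> powr p)) \<partial>P)
             \<le> ennreal (max (\<bar>a\<bar> powr p) (\<bar>real_of_ereal b\<bar> powr p))"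
    using part2[of P F B f g T M N a b x0 \<xi> U L p] H bfin assms(2,7) by auto
next
  fix P :: "'w measure" and F B M N \<xi> U L
  assume H: "brownian_motion P F B \<and> M \<ge> 1 \<and> N \<ge> 1 \<and> ABEP P F B f g T M N a b x0 \<xi> U L"
  show "prob_space.prob P {\<omega>\<in>space P. \<forall>t\<in>{0..T}. \<xi> t \<omega> \<in> closure (DN N a b)} = 1"
    using part3[of P F B f g T M N a b x0 \<xi> U L] H by auto
qed

end
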